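(* Let $K \subseteq \mathbb{R}$ be compact and let $\gamma: K \to \mathbb{H}$ be continuous. Then $\gamma \in C^1_{\mathbb{H}}(K)$ if and only if the Pansu difference quotients of $\gamma$ converge uniformly on $K$ to horizontal points, i.e. for every $a \in K$ there is a horizontal point $p_a \in \mathbb{R}^2 \times \{0\}$ such that $$\lim_{\substack{|b-a|\to 0\\ a,b\in K}} \left| \delta_{1/(b-a)}\left(\gamma(a)^{-1} * \gamma(b)\right) - p_a \right| = 0,$$ the limit being taken jointly over pairs $a \neq b$ in $K$ (that is, for every $\varepsilon>0$ there is $\delta>0$ such that the displayed quantity is $<\varepsilon$ for all $a,b\in K$ with $0<|b-a|<\delta$).
   Context: The Heisenberg group $\mathbb{H}$ is $\mathbb{R}^3$ with group law $(x,y,z)*(x',y',z') = (x+x',\,y+y',\,z+z'+2(yx'-xy'))$; the inverse is $(x,y,z)^{-1}=(-x,-y,-z)$. Dilations are $\delta_r(x,y,z) = (rx,ry,r^2 z)$ for $r \neq 0$. A point of $\mathbb{H}$ is horizontal if it lies in $\mathbb{R}^2\times\{0\}$. An absolutely continuous curve $\Gamma=(f,g,h):\mathbb{R}\to\mathbb{R}^3$ is horizontal if $h' = 2(f'g - fg')$ almost everywhere. $C^m(\mathbb{R})$ denotes the $m$-times continuously differentiable real functions $f$ with $\sup_{x\in\mathbb{R}}|f^{(m)}(x)|<\infty$, and $C^m(\mathbb{R},\mathbb{R}^3)$ the curves whose components lie in $C^m(\mathbb{R})$. For compact $K\subseteq\mathbb{R}$ and $\gamma:K\to\mathbb{H}$,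 one writes $\gamma \in C^m_{\mathbb{H}}(K)$ if there is a horizontal curve $\Gamma\in C^m(\mathbb{R},\mathbb{R}^3)$ with $\Gamma|_K=\gamma$. *)

theory Defs
  imports "HOL-Analysis.Analysis"
begin

definition hmult :: "real \<times> real \<times> real \<Rightarrow> real \<times> real \<times> real \<Rightarrow> real \<times> real \<times> real" where
  "hmult p q = (case p of (x, y, z) \<Rightarrow> case q of (x', y', z') \<Rightarrow>
      (x + x', y + y', z + z' + 2 * (y * x' - x * y')))"

definition hinv :: "real \<times> real \<times> real \<Rightarrow> real \<times> real \<times> real" where
  "hinv p = (case p of (x, y, z) \<Rightarrow> (- x, - y, - z))"

definition hdil :: "real \<Rightarrow> real \<times> real \<times> real \<Rightarrow> real \<times> real \<times> real" where
  "hdil r p = (case p of (x, y, z) \<Rightarrow> (r * x, r * y, r^2 * z))"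

definition horizontal_point :: "real \<times> real \<times> real \<Rightarrow> bool" where
  "horizontal_point p \<longleftrightarrow> snd (snd p) = 0"

text \<open>Absolute continuity of a real function on a compact interval [a,b]
  (finite families of non-overlapping subintervals, listed in increasing order).\<close>
definition abs_cont_on :: "real \<Rightarrow> real \<Rightarrow> (real \<Rightarrow> real) \<Rightarrow> bool" where
  "abs_cont_on a b f \<longleftrightarrow>
     (\<forall>\<epsilon>>0. \<exists>\<delta>>0. \<forall>(n::nat) (s::nat \<Rightarrow> real) (t::nat \<Rightarrow> real).
        (\<forall>i<n. a \<le> s i \<and> s i \<le> t i \<and> t i \<le> b) \<and>
        (\<forall>i<n. \<forall>j<n. i < j \<longrightarrow> t i \<le> s j) \<and>
        (\<Sum>i<n. t i - s i) < \<delta>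
        \<longrightarrow> (\<Sum>i<n. \<bar>f (t i) - f (s i)\<bar>) < \<epsilon>)"

definition abs_cont :: "(real \<Rightarrow> real) \<Rightarrow> bool" where
  "abs_cont f \<longleftrightarrow> (\<forall>a b. a \<le> b \<longrightarrow> abs_cont_on a b f)"

definition horizontal_curve :: "(real \<Rightarrow> real \<times> real \<times> real) \<Rightarrow> bool" where
  "horizontal_curve \<Gamma> \<longleftrightarrow>
     (let f = (\<lambda>t. fst (\<Gamma> t)); g = (\<lambda>t. fst (snd (\<Gamma> t))); h = (\<lambda>t. snd (snd (\<Gamma> t)))
      in abs_cont f \<and> abs_cont g \<and> abs_cont h \<and>
         (AE t in lborel. \<exists>f' g' h'.
            (f has_real_derivative f') (at t) \<and> (g has_real_derivative g') (at t) \<and>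
            (h has_real_derivative h') (at t) \<and> h' = 2 * (f' * g t - f t * g')))"

definition C1_fun :: "(real \<Rightarrow> real) \<Rightarrow> bool" where
  "C1_fun f \<longleftrightarrow> (\<exists>f'. (\<forall>x. (f has_real_derivative f' x) (at x)) \<and> continuous_on UNIV f'
                     \<and> bounded (range f'))"

definition C1_curve :: "(real \<Rightarrow> real \<times> real \<times> real) \<Rightarrow> bool" where
  "C1_curve \<Gamma> \<longleftrightarrow> C1_fun (\<lambda>t. fst (\<Gamma> t)) \<and> C1_fun (\<lambda>t. fst (snd (\<Gamma> t)))
                    \<and> C1_fun (\<lambda>t. snd (snd (\<Gamma> t)))"

definition C1_H :: "real set \<Rightarrow> (real \<Rightarrow> real \<times> real \<times> real) \<Rightarrow> bool" where
  "C1_H K \<gamma> \<longleftrightarrow> (\<exists>\<Gamma>. horizontal_curve \<Gamma> \<and> C1_curve \<Gamma> \<and> (\<forall>t\<in>K. \<Gamma> t = \<gamma> t))"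

end

theory Submission
  imports Defs
begin

lemma Q_eq:
  "hdil (1/(b-a)) (hmult (hinv (x,y,z)) (x',y',z')) =
    ((x'-x)/(b-a), (y'-y)/(b-a), (z'-z+2*(x*y'-y*x'))/(b-a)^2)"
  by (simp add: hdil_def hmult_def hinv_def power_divide algebra_simps)

lemma norm3_le: "norm ((x::real,y::real,z::real)) \<le> \<bar>x\<bar> + \<bar>y\<bar> + \<bar>z\<bar>"
proof -
  have "norm (x,y,z) \<le> norm x + norm (y,z)" by (rule norm_Pair_le)
  also have "norm (y,z) \<le> norm y + norm z" by (rule norm_Pair_le)
  finally show ?thesis by simp
qed

lemma norm3_ge:
  "\<bar>x\<bar> \<le> norm ((x::real,y::real,z::real))" "\<bar>y\<bar> \<le> norm (x,y,z)" "\<bar>z\<bar> \<le> norm (x,y,z)"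
proof -
  show "\<bar>x\<bar> \<le> norm (x,y,z)" using norm_fst_le[of x "(y,z)"] by simp
  have "norm (y,z) \<le> norm (x,(y,z))" by (rule norm_snd_le)
  then show "\<bar>y\<bar> \<le> norm (x,y,z)" "\<bar>z\<bar> \<le> norm (x,y,z)"
    using norm_fst_le[of y z] norm_snd_le[of z y] by auto
qed

lemma mvt_any:
  assumes "\<And>x. (f has_real_derivative f' x) (at x)"
  shows "\<exists>\<xi>. min a b \<le> \<xi> \<and> \<xi> \<le> max a b \<and> f b - f a = f' \<xi> * (b - a)"
proof -
  have cont: "continuous_on S f" for S
    using assms by (meson DERIV_isCont continuous_at_imp_continuous_on)
  have diff: "f differentiable at x" for x using assms real_differentiable_def by blast
  consider "a = b" | "a < b" | "b < a" by linarith
  then show ?thesis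
  proof cases
    case 1 then show ?thesis by auto
  next
    case 2
    from MVT[OF 2 cont diff] obtain l z where "a < z" "z < b" "(f has_real_derivative l) (at z)"
      "f b - f a = (b - a) * l" by blast
    moreover have "l = f' z" using DERIV_unique assms calculation(3) by blast
    ultimately show ?thesis using 2 by (intro exI[of _ z]) auto
  next
    case 3
    from MVT[OF 3 cont diff] obtain l z where "b < z" "z < a" "(f has_real_derivative l) (at z)"
      "f a - f b = (a - b) * l" by blast
    moreover have "l = f' z" using DERIV_unique assms calculation(3) by blast
    ultimately show ?thesis using 3 by (intro exI[of _ z]) (auto simp: algebra_simps)
  qed
qed

lemma lipschitz_abs_cont:
  assumes "\<And>x y. \<bar>f x - f y\<bar> \<le> B * \<bar>x - y\<bar>" "B \<ge> 0"
  shows "abs_cont f"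
  unfolding abs_cont_def abs_cont_on_def
proof (intro allI impI)
  fix a b \<epsilon> :: real assume "\<epsilon> > 0"
  show "\<exists>\<delta>>0. \<forall>n s t. (\<forall>i<n. a \<le> s i \<and> s i \<le> t i \<and> t i \<le> b) \<and>
        (\<forall>i<n. \<forall>j<n. i < j \<longrightarrow> t i \<le> s j) \<and> (\<Sum>i<n. t i - s i) < \<delta> \<longrightarrow>
        (\<Sum>i<n. \<bar>f (t i) - f (s i)\<bar>) < \<epsilon>"
  proof (intro exI[of _ "\<epsilon> / (B + 1)"] conjI allI impI)
    show "\<epsilon> / (B + 1) > 0" using \<open>\<epsilon>>0\<close> \<open>B\<ge>0\<close> by simp
    fix n s t
    assume h: "(\<forall>i<n. a \<le> s i \<and> s i \<le> t i \<and> t i \<le> b) \<and>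
        (\<forall>i<n. \<forall>j<n. i < j \<longrightarrow> t i \<le> s j) \<and> (\<Sum>i<n. t i - s i) < \<epsilon> / (B + 1)"
    have "(\<Sum>i<n. \<bar>f (t i) - f (s i)\<bar>) \<le> (\<Sum>i<n. B * (t i - s i))"
      apply (rule sum_mono) using assms(1) h by (metis abs_of_nonneg diff_ge_0_iff_ge lessThan_iff)
    also have "\<dots> = B * (\<Sum>i<n. t i - s i)" by (simp add: sum_distrib_left)
    also have "\<dots> \<le> B * (\<epsilon> / (B + 1))"
      using h assms(2) by (intro mult_left_mono) auto
    also have "\<dots> < \<epsilon>" using \<open>\<epsilon>>0\<close> \<open>B\<ge>0\<close>
      by (simp add: field_simps)
    finally show "(\<Sum>i<n. \<bar>f (t i) - f (s i)\<bar>) < \<epsilon>" .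
  qed
qed

lemma deriv_bounded_abs_cont:
  assumes "\<And>x. (f has_real_derivative f' x) (at x)" "\<And>x. \<bar>f' x\<bar> \<le> B"
  shows "abs_cont f"
proof (rule lipschitz_abs_cont[of f B])
  show "B \<ge> 0" using assms(2)[of 0] by simp
  fix x y
  obtain \<xi> where "f x - f y = f' \<xi> * (x - y)" using mvt_any[OF assms(1), of y x] by blast
  then show "\<bar>f x - f y\<bar> \<le> B * \<bar>x - y\<bar>"
    by (simp add: abs_mult assms(2) mult_right_mono)
qed

lemma C1_fun_abs_cont: "C1_fun f \<Longrightarrow> abs_cont f"
  unfolding C1_fun_def
proof (elim exE conjE)
  fix f' assume d: "\<forall>x. (f has_real_derivative f' x) (at x)" and "bounded (range f')"
  then obtain B where "\<forall>x\<in>range f'. norm x \<le> B" by (meson bounded_iff)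
  then show "abs_cont f" using deriv_bounded_abs_cont[of f f' B] d by auto
qed

lemma AE_open_everywhere:
  fixes P :: "real \<Rightarrow> bool"
  assumes "AE t in lborel. P t" "open {t. \<not> P t}"
  shows "P x"
proof (rule ccontr)
  assume "\<not> P x"
  then obtain e where e: "e > 0" "ball x e \<subseteq> {t. \<not> P t}"
    using assms(2) open_contains_ball by blast
  from assms(1) obtain N where N: "N \<in> null_sets lborel" "{t. \<not> P t} \<subseteq> N"
    by (rule AE_E) (auto simp: null_sets_def)
  have sub: "{x - e/2..x + e/2} \<subseteq> N" using e N(2)
    by (auto simp: dist_real_def subset_iff)
  have "emeasure lborel {x - e/2..x + e/2} \<le> emeasure lborel N"
    by (rule emeasure_mono[OF sub]) (use N in auto)
  also have "\<dots> = 0" using N by auto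
  finally show False using e by simp
qed


lemma C1_fun_D:
  assumes "C1_fun f"
  obtains f' B where "\<And>x. (f has_real_derivative f' x) (at x)" "continuous_on UNIV f'"
    "\<And>x. \<bar>f' x\<bar> \<le> B"
proof -
  from assms obtain f' where d: "\<forall>x. (f has_real_derivative f' x) (at x)" "continuous_on UNIV f'"
    "bounded (range f')" unfolding C1_fun_def by blast
  then obtain B where "\<forall>x\<in>range f'. norm x \<le> B" by (meson bounded_iff)
  then show ?thesis using that d by auto
qed

lemma forward:
  fixes K :: "real set" and \<gamma> :: "real \<Rightarrow> real \<times> real \<times> real"
  assumes "compact K" and "C1_H K \<gamma>"
  shows "\<exists>p :: real \<Rightarrow> real \<times> real \<times> real.
       (\<forall>a\<in>K. horizontal_point (p a)) \<and>
       (\<forall>\<epsilon>>0. \<exists>\<delta>>0. \<forall>a\<in>K. \<forall>b\<in>K. 0 < \<bar>b - a\<bar> \<and> \<bar>b - a\<bar> < \<delta> \<longrightarrow>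
          norm (hdil (1 / (b - a)) (hmult (hinv (\<gamma> a)) (\<gamma> b)) - p a) < \<epsilon>)"
proof -
  obtain \<Gamma> where hc: "horizontal_curve \<Gamma>" and c1: "C1_curve \<Gamma>" and eq: "\<forall>t\<in>K. \<Gamma> t = \<gamma> t"
    using assms(2) unfolding C1_H_def by blast
  define F where "F t = fst (\<Gamma> t)" for t
  define G where "G t = fst (snd (\<Gamma> t))" for t
  define H where "H t = snd (snd (\<Gamma> t))" for t
  have \<Gamma>eq: "\<Gamma> t = (F t, G t, H t)" for t by (simp add: F_def G_def H_def)
  have c1F: "C1_fun F" "C1_fun G" "C1_fun H" using c1
    by (simp_all add: C1_curve_def F_def[abs_def] G_def[abs_def] H_def[abs_def])
  obtain F' BF where dF: "\<And>x. (F has_real_derivative F' x) (at x)" and cF: "continuous_on UNIV F'"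
    and bF: "\<And>x. \<bar>F' x\<bar> \<le> BF"
    using C1_fun_D[OF c1F(1)] by metis
  obtain G' BG where dG: "\<And>x. (G has_real_derivative G' x) (at x)" and cG: "continuous_on UNIV G'"
    and bG: "\<And>x. \<bar>G' x\<bar> \<le> BG"
    using C1_fun_D[OF c1F(2)] by metis
  obtain H' BH where dH: "\<And>x. (H has_real_derivative H' x) (at x)" and cH: "continuous_on UNIV H'"
    using C1_fun_D[OF c1F(3)] by metis
  have contF: "continuous_on UNIV F" using dF
    by (meson DERIV_isCont continuous_at_imp_continuous_on)
  have contG: "continuous_on UNIV G" using dG
    by (meson DERIV_isCont continuous_at_imp_continuous_on)
  have AEh: "AE t in lborel. H' t = 2 * (F' t * G t - F t * G' t)"
  proof -
    have "AE t in lborel. \<exists>f' g' h'.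
            (F has_real_derivative f') (at t) \<and> (G has_real_derivative g') (at t) \<and>
            (H has_real_derivative h') (at t) \<and> h' = 2 * (f' * G t - F t * g')"
      using hc unfolding horizontal_curve_def Let_def F_def[abs_def] G_def[abs_def] H_def[abs_def]
      by blast
    then show ?thesis
    proof (rule AE_mp, intro AE_I2 impI)
      fix t assume "\<exists>f' g' h'.
            (F has_real_derivative f') (at t) \<and> (G has_real_derivative g') (at t) \<and>
            (H has_real_derivative h') (at t) \<and> h' = 2 * (f' * G t - F t * g')"
      then obtain f' g' h' where "(F has_real_derivative f') (at t)" "(G has_real_derivative g') (at t)"
            "(H has_real_derivative h') (at t)" "h' = 2 * (f' * G t - F t * g')" by blast
      moreover have "f' = F' t" using DERIV_unique calculation(1) dF by blast
      moreover have "g' = G' t" using DERIV_unique calculation(2) dG by blast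
      moreover have "h' = H' t" using DERIV_unique calculation(3) dH by blast
      ultimately show "H' t = 2 * (F' t * G t - F t * G' t)" by simp
    qed
  qed
  have hor: "H' t = 2 * (F' t * G t - F t * G' t)" for t
  proof (rule AE_open_everywhere[OF AEh])
    have "continuous_on UNIV (\<lambda>t. H' t - 2 * (F' t * G t - F t * G' t))"
      by (intro continuous_intros cF cG cH contF contG)
    then have "open ((\<lambda>t. H' t - 2 * (F' t * G t - F t * G' t)) -` (UNIV - {0}))"
      by (simp add: continuous_on_open_vimage open_Diff del: vimage_Diff)
    moreover have "(\<lambda>t. H' t - 2 * (F' t * G t - F t * G' t)) -` (UNIV - {0}) =
        {t. \<not> H' t = 2 * (F' t * G t - F t * G' t)}" by auto
    ultimately show "open {t. \<not> H' t = 2 * (F' t * G t - F t * G' t)}" by simp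
  qed
  define B where "B = max BF BG"
  have bF': "\<bar>F' x\<bar> \<le> B" and bG': "\<bar>G' x\<bar> \<le> B" for x using bF bG by (auto simp: B_def intro: max.coboundedI1 max.coboundedI2)
  have "B \<ge> 0" using bF'[of 0] by simp
  obtain R where R: "K \<subseteq> {-R..R}"
    using compact_imp_bounded[OF assms(1)] bounded_subset_cbox_symmetric by (metis cbox_interval)
  define S where "S = {-R..R}"
  have ucF: "uniformly_continuous_on S F'"
    by (rule compact_uniformly_continuous) (use cF continuous_on_subset in \<open>auto simp: S_def\<close>)
  have ucG: "uniformly_continuous_on S G'"
    by (rule compact_uniformly_continuous) (use cG continuous_on_subset in \<open>auto simp: S_def\<close>)
  define p where "p a = (F' a, G' a, 0::real)" for a
  show ?thesis
  proof (intro exI[of _ p] conjI ballI allI impI)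
    fix a assume "a \<in> K" then show "horizontal_point (p a)" by (simp add: p_def horizontal_point_def)
  next
    fix \<epsilon> :: real assume "\<epsilon> > 0"
    define \<omega> where "\<omega> = \<epsilon> / (2 + 4 * B)"
    have "\<omega> > 0" using \<open>\<epsilon>>0\<close> \<open>B\<ge>0\<close> by (simp add: \<omega>_def)
    obtain d1 where d1: "d1 > 0" "\<And>x y. x \<in> S \<Longrightarrow> y \<in> S \<Longrightarrow> dist y x < d1 \<Longrightarrow> dist (F' y) (F' x) < \<omega>"
      using ucF \<open>\<omega>>0\<close> unfolding uniformly_continuous_on_def by metis
    obtain d2 where d2: "d2 > 0" "\<And>x y. x \<in> S \<Longrightarrow> y \<in> S \<Longrightarrow> dist y x < d2 \<Longrightarrow> dist (G' y) (G' x) < \<omega>"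
      using ucG \<open>\<omega>>0\<close> unfolding uniformly_continuous_on_def by metis
    show "\<exists>\<delta>>0. \<forall>a\<in>K. \<forall>b\<in>K. 0 < \<bar>b - a\<bar> \<and> \<bar>b - a\<bar> < \<delta> \<longrightarrow>
          norm (hdil (1 / (b - a)) (hmult (hinv (\<gamma> a)) (\<gamma> b)) - p a) < \<epsilon>"
    proof (intro exI[of _ "min d1 d2"] conjI ballI impI)
      show "min d1 d2 > 0" using d1 d2 by simp
      fix a b assume a: "a \<in> K" and b: "b \<in> K" and ab: "0 < \<bar>b - a\<bar> \<and> \<bar>b - a\<bar> < min d1 d2"
      have inS: "x \<in> S" if "min a b \<le> x" "x \<le> max a b" for x
      proof -
        have "-R \<le> a" "a \<le> R" "-R \<le> b" "b \<le> R" using a b R by auto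
        then show ?thesis using that by (auto simp: S_def)
      qed
      have close: "\<bar>x - y\<bar> < min d1 d2" if "min a b \<le> x" "x \<le> max a b" "min a b \<le> y" "y \<le> max a b" for x y
        using that ab by (auto simp: abs_if split: if_splits)
      have cF': "\<bar>F' x - F' y\<bar> < \<omega>" if "min a b \<le> x" "x \<le> max a b" "min a b \<le> y" "y \<le> max a b" for x y
        using d1(2)[of y x] inS[OF that(1,2)] inS[OF that(3,4)] close[OF that] by (simp add: dist_real_def)
      have cG': "\<bar>G' x - G' y\<bar> < \<omega>" if "min a b \<le> x" "x \<le> max a b" "min a b \<le> y" "y \<le> max a b" for x y
        using d2(2)[of y x] inS[OF that(1,2)] inS[OF that(3,4)] close[OF that] by (simp add: dist_real_def)
      have ne: "b - a \<noteq> 0" using ab by auto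
      obtain \<xi>1 where x1: "min a b \<le> \<xi>1" "\<xi>1 \<le> max a b" "F b - F a = F' \<xi>1 * (b - a)"
        using mvt_any[OF dF] by blast
      obtain \<xi>2 where x2: "min a b \<le> \<xi>2" "\<xi>2 \<le> max a b" "G b - G a = G' \<xi>2 * (b - a)"
        using mvt_any[OF dG] by blast
      define \<phi> where "\<phi> t = H t - H a + 2 * (F a * G t - G a * F t)" for t
      define \<phi>' where "\<phi>' t = 2 * (F' t * (G t - G a) - G' t * (F t - F a))" for t
      have d\<phi>: "(\<phi> has_real_derivative \<phi>' t) (at t)" for t
        unfolding \<phi>_def[abs_def] \<phi>'_def
        by (rule derivative_eq_intros dF dG dH refl)+ (simp add: hor algebra_simps)
      obtain \<xi> where x: "min a b \<le> \<xi>" "\<xi> \<le> max a b" "\<phi> b - \<phi> a = \<phi>' \<xi> * (b - a)"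
        using mvt_any[OF d\<phi>] by blast
      obtain \<eta> where e: "min a \<xi> \<le> \<eta>" "\<eta> \<le> max a \<xi>" "G \<xi> - G a = G' \<eta> * (\<xi> - a)"
        using mvt_any[OF dG] by blast
      obtain \<zeta> where z: "min a \<xi> \<le> \<zeta>" "\<zeta> \<le> max a \<xi>" "F \<xi> - F a = F' \<zeta> * (\<xi> - a)"
        using mvt_any[OF dF] by blast
      have e': "min a b \<le> \<eta>" "\<eta> \<le> max a b" "min a b \<le> \<zeta>" "\<zeta> \<le> max a b" using e z x by auto
      have "\<phi>' \<xi> = 2 * (\<xi> - a) * (F' \<xi> * (G' \<eta> - G' \<xi>) + G' \<xi> * (F' \<xi> - F' \<zeta>))"
        unfolding \<phi>'_def e(3) z(3) by (simp add: algebra_simps)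
      moreover have "\<bar>\<xi> - a\<bar> \<le> \<bar>b - a\<bar>" using x by (auto simp: abs_if split: if_splits)
      moreover have "\<bar>F' \<xi> * (G' \<eta> - G' \<xi>) + G' \<xi> * (F' \<xi> - F' \<zeta>)\<bar> \<le> B * \<omega> + B * \<omega>"
      proof -
        have "\<bar>F' \<xi> * (G' \<eta> - G' \<xi>)\<bar> \<le> B * \<omega>"
          unfolding abs_mult using bF' cG'[of \<eta> \<xi>] x e' \<open>B\<ge>0\<close>
          by (intro mult_mono) auto
        moreover have "\<bar>G' \<xi> * (F' \<xi> - F' \<zeta>)\<bar> \<le> B * \<omega>"
          unfolding abs_mult using bG' cF'[of \<xi> \<zeta>] x e' \<open>B\<ge>0\<close>
          by (intro mult_mono) auto
        ultimately show ?thesis by linarith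
      qed
      ultimately have "\<bar>\<phi>' \<xi>\<bar> \<le> 2 * \<bar>b - a\<bar> * (2 * B * \<omega>)"
      proof -
        assume a1: "\<phi>' \<xi> = 2 * (\<xi> - a) * (F' \<xi> * (G' \<eta> - G' \<xi>) + G' \<xi> * (F' \<xi> - F' \<zeta>))"
          and a2: "\<bar>\<xi> - a\<bar> \<le> \<bar>b - a\<bar>"
          and a3: "\<bar>F' \<xi> * (G' \<eta> - G' \<xi>) + G' \<xi> * (F' \<xi> - F' \<zeta>)\<bar> \<le> B * \<omega> + B * \<omega>"
        have "\<bar>\<phi>' \<xi>\<bar> = 2 * \<bar>\<xi> - a\<bar> * \<bar>F' \<xi> * (G' \<eta> - G' \<xi>) + G' \<xi> * (F' \<xi> - F' \<zeta>)\<bar>"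
          unfolding a1 abs_mult by simp
        also have "\<dots> \<le> 2 * \<bar>b - a\<bar> * (B * \<omega> + B * \<omega>)"
          using a2 a3 by (intro mult_mono) auto
        finally show ?thesis by simp
      qed
      then have "\<bar>\<phi> b\<bar> \<le> 2 * \<bar>b - a\<bar> * (2 * B * \<omega>) * \<bar>b - a\<bar>"
        using x(3) by (simp add: \<phi>_def abs_mult mult_right_mono)
      then have q3: "\<bar>\<phi> b / (b - a)^2\<bar> \<le> 4 * B * \<omega>"
      proof -
        assume h: "\<bar>\<phi> b\<bar> \<le> 2 * \<bar>b - a\<bar> * (2 * B * \<omega>) * \<bar>b - a\<bar>"
        have pos: "(b - a)^2 > 0" using ne by simp
        have "\<bar>\<phi> b / (b - a)^2\<bar> = \<bar>\<phi> b\<bar> / (b - a)^2" by (simp add: abs_div)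
        also have "\<dots> \<le> (4 * B * \<omega>) * (b - a)^2 / (b - a)^2"
        proof (rule divide_right_mono)
          have e1: "\<bar>b - a\<bar> * \<bar>b - a\<bar> = (b - a)^2" by (simp add: power2_eq_square)
          have gen: "\<And>q::real. 2 * q * (2 * B * \<omega>) * q = (4 * B * \<omega>) * (q * q)"
            by (simp add: algebra_simps)
          have "2 * \<bar>b - a\<bar> * (2 * B * \<omega>) * \<bar>b - a\<bar> = (4 * B * \<omega>) * (\<bar>b - a\<bar> * \<bar>b - a\<bar>)"
            by (rule gen)
          then have eq: "2 * \<bar>b - a\<bar> * (2 * B * \<omega>) * \<bar>b - a\<bar> = (4 * B * \<omega>) * (b - a)^2"
            by (simp only: e1)
          show "\<bar>\<phi> b\<bar> \<le> (4 * B * \<omega>) * (b - a)^2" using h[unfolded eq] .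
        qed (use pos in simp)
        also have "\<dots> = 4 * B * \<omega>" using pos by simp
        finally show ?thesis .
      qed
      have q1: "\<bar>(F b - F a) / (b - a) - F' a\<bar> < \<omega>"
        using x1 ne cF'[of \<xi>1 a] by simp
      have q2: "\<bar>(G b - G a) / (b - a) - G' a\<bar> < \<omega>"
        using x2 ne cG'[of \<xi>2 a] by simp
      have "hdil (1 / (b - a)) (hmult (hinv (\<gamma> a)) (\<gamma> b)) - p a =
            ((F b - F a) / (b - a) - F' a, (G b - G a) / (b - a) - G' a, \<phi> b / (b - a)^2)"
      proof -
        have "\<gamma> a = (F a, G a, H a)" "\<gamma> b = (F b, G b, H b)" using eq a b \<Gamma>eq by metis+
        then show ?thesis by (simp add: Q_eq p_def \<phi>_def algebra_simps)
      qed
      then have "norm (hdil (1 / (b - a)) (hmult (hinv (\<gamma> a)) (\<gamma> b)) - p a) \<le>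
          \<bar>(F b - F a) / (b - a) - F' a\<bar> + \<bar>(G b - G a) / (b - a) - G' a\<bar> + \<bar>\<phi> b / (b - a)^2\<bar>"
        by (simp only: norm3_le)
      also have "\<dots> < \<omega> + \<omega> + 4 * B * \<omega>" using q1 q2 q3 by linarith
      also have "\<dots> = (2 + 4 * B) * \<omega>" by (simp add: algebra_simps)
      also have "\<dots> = \<epsilon>" using \<open>B\<ge>0\<close> by (simp add: \<omega>_def)
      finally show "norm (hdil (1 / (b - a)) (hmult (hinv (\<gamma> a)) (\<gamma> b)) - p a) < \<epsilon>" .
    qed
  qed
qed


definition hx :: "real \<Rightarrow> real \<Rightarrow> real \<Rightarrow> real \<Rightarrow> real \<Rightarrow> real" where
  "hx X u v c s = X * (3* s^2 - 2* s^3) + u * (s - 2* s^2 + s^3) + v * (s^3 - s^2) + c * (s^2 * (1-s)^2)"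
definition hxd :: "real \<Rightarrow> real \<Rightarrow> real \<Rightarrow> real \<Rightarrow> real \<Rightarrow> real" where
  "hxd X u v c s = X * (6* s - 6* s^2) + u * (1 - 4* s + 3* s^2) + v * (3* s^2 - 2* s) + c * (2* s * (1-s) * (1-2* s))"
definition hy :: "real \<Rightarrow> real \<Rightarrow> real \<Rightarrow> real \<Rightarrow> real \<Rightarrow> real" where
  "hy X u v c s = X * (3* s^2 - 2* s^3) + u * (s - 2* s^2 + s^3) + v * (s^3 - s^2) + c * (s^3 * (1-s)^2)"
definition hyd :: "real \<Rightarrow> real \<Rightarrow> real \<Rightarrow> real \<Rightarrow> real \<Rightarrow> real" where
  "hyd X u v c s = X * (6* s - 6* s^2) + u * (1 - 4* s + 3* s^2) + v * (3* s^2 - 2* s) + c * (s^2 * (1-s) * (3-5* s))"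

lemma hx_deriv: "((hx X u v c) has_real_derivative hxd X u v c s) (at s within S)"
  unfolding hx_def[abs_def] hxd_def
  by (rule derivative_eq_intros refl)+ (simp add: power2_eq_square power3_eq_cube algebra_simps)

lemma hy_deriv: "((hy X u v c) has_real_derivative hyd X u v c s) (at s within S)"
  unfolding hy_def[abs_def] hyd_def
  by (rule derivative_eq_intros refl)+ (simp add: power2_eq_square power3_eq_cube algebra_simps)

lemma hx_vals: "hx X u v c 0 = 0" "hx X u v c 1 = X" "hxd X u v c 0 = u" "hxd X u v c 1 = v"
  by (simp_all add: hx_def hxd_def)
lemma hy_vals: "hy X u v c 0 = 0" "hy X u v c 1 = X" "hyd X u v c 0 = u" "hyd X u v c 1 = v"
  by (simp_all add: hy_def hyd_def)

lemma cont_hxd: "continuous_on S (hxd X u v c)" unfolding hxd_def by (intro continuous_intros)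
lemma cont_hyd: "continuous_on S (hyd X u v c)" unfolding hyd_def by (intro continuous_intros)
lemma cont_hx: "continuous_on S (hx X u v c)" unfolding hx_def by (intro continuous_intros)
lemma cont_hy: "continuous_on S (hy X u v c)" unfolding hy_def by (intro continuous_intros)

section \<open>Elementary bounds on [0,1]\<close>

lemma b01:
  fixes s :: real assumes "0 \<le> s" "s \<le> 1"
  shows "\<bar>6* s - 6* s^2\<bar> \<le> 3" "\<bar>1 - 4* s + 3* s^2\<bar> \<le> 3" "\<bar>3* s^2 - 2* s\<bar> \<le> 3"
    "\<bar>2* s * (1-s) * (1-2* s)\<bar> \<le> 3" "\<bar>s^2 * (1-s) * (3-5* s)\<bar> \<le> 3"
    "\<bar>3* s^2 - 2* s^3\<bar> \<le> 1" "\<bar>s - 2* s^2 + s^3\<bar> \<le> 1" "\<bar>s^3 - s^2\<bar> \<le> 1"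
    "\<bar>s^2 * (1-s)^2\<bar> \<le> 1" "\<bar>s^3 * (1-s)^2\<bar> \<le> 1"
proof -
  have s2: "s^2 \<le> s" "0 \<le> s^2" using assms by (auto simp: power2_eq_square mult_right_le_one_le)
  have s3: "s^3 \<le> s^2" "0 \<le> s^3" using assms
    by (auto simp: power3_eq_cube power2_eq_square mult_right_le_one_le)
  have o: "0 \<le> 1 - s" "1 - s \<le> 1" using assms by auto
  have q: "s - s^2 \<le> 1/4"
  proof -
    have "0 \<le> (2 * s - 1)^2" by simp
    then show ?thesis by (simp add: power2_eq_square algebra_simps)
  qed
  have o2: "0 \<le> (1-s)^2" "(1-s)^2 \<le> 1" using o by (auto simp: power2_eq_square mult_le_one)
  show "\<bar>6* s - 6* s^2\<bar> \<le> 3" unfolding abs_le_iff using s2 assms q by linarith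
  show "\<bar>1 - 4* s + 3* s^2\<bar> \<le> 3" unfolding abs_le_iff using s2 assms by linarith
  show "\<bar>3* s^2 - 2* s\<bar> \<le> 3" unfolding abs_le_iff using s2 assms by linarith
  show "\<bar>3* s^2 - 2* s^3\<bar> \<le> 1" using s2 s3 assms
  proof -
    have "3* s^2 - 2* s^3 = s^2 * (3 - 2* s)" by (simp add: power2_eq_square power3_eq_cube algebra_simps)
    moreover have "0 \<le> s^2 * (3 - 2* s)" using assms by simp
    moreover have "s^2 * (3 - 2* s) \<le> 1 * 1"
    proof -
      have "s^2 * (3 - 2* s) \<le> s^2 * 3 - 2 * s^3" by (simp add: power2_eq_square power3_eq_cube algebra_simps)
      have "1 - (3* s^2 - 2* s^3) = (1 - s)^2 * (1 + 2* s)" by (simp add: power2_eq_square power3_eq_cube algebra_simps)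
      moreover have "(1 - s)^2 * (1 + 2* s) \<ge> 0" using assms by simp
      ultimately show ?thesis by (simp add: power2_eq_square power3_eq_cube algebra_simps)
    qed
    ultimately show ?thesis by simp
  qed
  show "\<bar>s - 2* s^2 + s^3\<bar> \<le> 1"
  proof -
    have "s - 2* s^2 + s^3 = s * (1 - s)^2" by (simp add: power2_eq_square power3_eq_cube algebra_simps)
    moreover have "0 \<le> s * (1 - s)^2" using assms by simp
    moreover have "s * (1 - s)^2 \<le> 1 * 1" using assms o2 by (intro mult_mono) auto
    ultimately show ?thesis by simp
  qed
  show "\<bar>s^3 - s^2\<bar> \<le> 1" unfolding abs_le_iff using s2 s3 assms by linarith
  show "\<bar>s^2 * (1-s)^2\<bar> \<le> 1"
  proof -
    have "s^2 * (1-s)^2 \<le> 1 * 1" using s2 o2 assms by (intro mult_mono) auto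
    then show ?thesis using s2 o2 by simp
  qed
  show "\<bar>s^3 * (1-s)^2\<bar> \<le> 1"
  proof -
    have "s^3 * (1-s)^2 \<le> 1 * 1" using s2 s3 o2 assms by (intro mult_mono) auto
    then show ?thesis using s3 o2 by simp
  qed
  show "\<bar>2* s * (1-s) * (1-2* s)\<bar> \<le> 3"
  proof -
    have "\<bar>2* s * (1-s) * (1-2* s)\<bar> = 2 * (s * ((1-s) * \<bar>1-2* s\<bar>))" using assms by (simp add: abs_mult)
    also have "\<dots> \<le> 2 * (1 * (1 * 1))" using assms o
      by (intro mult_left_mono mult_mono) auto
    finally show ?thesis by simp
  qed
  show "\<bar>s^2 * (1-s) * (3-5* s)\<bar> \<le> 3"
  proof -
    have "\<bar>s^2 * (1-s) * (3-5* s)\<bar> = s^2 * ((1-s) * \<bar>3-5* s\<bar>)" using assms by (simp add: abs_mult)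
    also have "\<dots> \<le> 1 * (1 * 3)"
    proof (intro mult_mono)
      show "\<bar>3 - 5 * s\<bar> \<le> 3" unfolding abs_le_iff using assms by linarith
    qed (use assms o s2 in \<open>auto intro: assms(1)\<close>)
    finally show ?thesis by simp
  qed
qed

lemma abs4:
  fixes a1 a2 a3 a4 b1 b2 b3 b4 :: real
  assumes "\<bar>b1\<bar> \<le> B1" "\<bar>b2\<bar> \<le> B2" "\<bar>b3\<bar> \<le> B3" "\<bar>b4\<bar> \<le> B4"
  shows "\<bar>a1 * b1 + a2 * b2 + a3 * b3 + a4 * b4\<bar> \<le> \<bar>a1\<bar> * B1 + \<bar>a2\<bar> * B2 + \<bar>a3\<bar> * B3 + \<bar>a4\<bar> * B4"
proof -
  have "\<bar>a1 * b1\<bar> \<le> \<bar>a1\<bar> * B1" "\<bar>a2 * b2\<bar> \<le> \<bar>a2\<bar> * B2" "\<bar>a3 * b3\<bar> \<le> \<bar>a3\<bar> * B3" "\<bar>a4 * b4\<bar> \<le> \<bar>a4\<bar> * B4"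
    using assms by (auto simp: abs_mult intro: mult_left_mono)
  then show ?thesis by (smt (verit, best) abs_triangle_ineq)
qed

lemma hxd_bound:
  assumes "0 \<le> s" "s \<le> 1"
  shows "\<bar>hxd X u v c s - r\<bar> \<le> 3 * (\<bar>X - r\<bar> + \<bar>u - r\<bar> + \<bar>v - r\<bar> + \<bar>c\<bar>)"
proof -
  have "hxd X u v c s - r = (X - r) * (6 * s - 6 * s^2) + (u - r) * (1 - 4 * s + 3 * s^2) + (v - r) * (3 * s^2 - 2 * s) + c * (2 * s * (1-s) * (1-2 * s))"
    by (simp add: hxd_def algebra_simps)
  also have "\<bar>\<dots>\<bar> \<le> \<bar>X - r\<bar> * 3 + \<bar>u - r\<bar> * 3 + \<bar>v - r\<bar> * 3 + \<bar>c\<bar> * 3"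
    by (rule abs4) (fact b01[OF assms])+
  finally show ?thesis by (simp add: algebra_simps)
qed

lemma hyd_bound:
  assumes "0 \<le> s" "s \<le> 1"
  shows "\<bar>hyd X u v c s - r\<bar> \<le> 3 * (\<bar>X - r\<bar> + \<bar>u - r\<bar> + \<bar>v - r\<bar> + \<bar>c\<bar>)"
proof -
  have "hyd X u v c s - r = (X - r) * (6 * s - 6 * s^2) + (u - r) * (1 - 4 * s + 3 * s^2) + (v - r) * (3 * s^2 - 2 * s) + c * (s^2 * (1-s) * (3-5 * s))"
    by (simp add: hyd_def algebra_simps)
  also have "\<bar>\<dots>\<bar> \<le> \<bar>X - r\<bar> * 3 + \<bar>u - r\<bar> * 3 + \<bar>v - r\<bar> * 3 + \<bar>c\<bar> * 3"
    by (rule abs4) (fact b01[OF assms])+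
  finally show ?thesis by (simp add: algebra_simps)
qed

lemma hx_bound:
  assumes "0 \<le> s" "s \<le> 1"
  shows "\<bar>hx X u v c s - r * s\<bar> \<le> \<bar>X - r\<bar> + \<bar>u - r\<bar> + \<bar>v - r\<bar> + \<bar>c\<bar>"
proof -
  have "hx X u v c s - r * s = (X - r) * (3 * s^2 - 2 * s^3) + (u - r) * (s - 2 * s^2 + s^3) + (v - r) * (s^3 - s^2) + c * (s^2 * (1-s)^2)"
    by (simp add: hx_def algebra_simps)
  also have "\<bar>\<dots>\<bar> \<le> \<bar>X - r\<bar> * 1 + \<bar>u - r\<bar> * 1 + \<bar>v - r\<bar> * 1 + \<bar>c\<bar> * 1"
    by (rule abs4) (fact b01[OF assms])+
  finally show ?thesis by (simp add: algebra_simps)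
qed

lemma hy_bound:
  assumes "0 \<le> s" "s \<le> 1"
  shows "\<bar>hy X u v c s - r * s\<bar> \<le> \<bar>X - r\<bar> + \<bar>u - r\<bar> + \<bar>v - r\<bar> + \<bar>c\<bar>"
proof -
  have "hy X u v c s - r * s = (X - r) * (3 * s^2 - 2 * s^3) + (u - r) * (s - 2 * s^2 + s^3) + (v - r) * (s^3 - s^2) + c * (s^3 * (1-s)^2)"
    by (simp add: hy_def algebra_simps)
  also have "\<bar>\<dots>\<bar> \<le> \<bar>X - r\<bar> * 1 + \<bar>u - r\<bar> * 1 + \<bar>v - r\<bar> * 1 + \<bar>c\<bar> * 1"
    by (rule abs4) (fact b01[OF assms])+
  finally show ?thesis by (simp add: algebra_simps)
qed


definition Jf :: "real \<Rightarrow> real \<Rightarrow> real \<Rightarrow> real \<Rightarrow> real \<Rightarrow> real \<Rightarrow> real \<Rightarrow> real \<Rightarrow> real \<Rightarrow> real" where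
  "Jf X1 u1 v1 c1 X2 u2 v2 c2 s = hxd X1 u1 v1 c1 s * hy X2 u2 v2 c2 s - hx X1 u1 v1 c1 s * hyd X2 u2 v2 c2 s"

definition area :: "real \<Rightarrow> real \<Rightarrow> real \<Rightarrow> real \<Rightarrow> real \<Rightarrow> real \<Rightarrow> real \<Rightarrow> real \<Rightarrow> real" where
  "area X1 u1 v1 c1 X2 u2 v2 c2 = 2 * integral {0..1} (Jf X1 u1 v1 c1 X2 u2 v2 c2)"

lemma cont_Jf: "continuous_on S (Jf X1 u1 v1 c1 X2 u2 v2 c2)"
  unfolding Jf_def[abs_def] by (intro continuous_intros cont_hx cont_hy cont_hxd cont_hyd)

lemma hsplit:
  "hx X u v c s = hx X u v 0 s + c * (s^2 * (1-s)^2)"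
  "hxd X u v c s = hxd X u v 0 s + c * (2 * s * (1-s) * (1-2 * s))"
  "hy X u v c s = hy X u v 0 s + c * (s^3 * (1-s)^2)"
  "hyd X u v c s = hyd X u v 0 s + c * (s^2 * (1-s) * (3-5 * s))"
  by (simp_all add: hx_def hxd_def hy_def hyd_def)

lemma w_ident: "(2 * s * (1-s) * (1-2 * s)) * (s^3 * (1-s)^2) - (s^2 * (1-s)^2) * (s^2 * (1-s) * (3-5 * s))
   = - ((s^2 * (1-s)^2)^2 :: real)"
  by (simp add: power2_eq_square power3_eq_cube algebra_simps)

definition J1 :: "real \<Rightarrow> real \<Rightarrow> real \<Rightarrow> real \<Rightarrow> real \<Rightarrow> real \<Rightarrow> real \<Rightarrow> real \<Rightarrow> real" where
  "J1 \<sigma> X1 u1 v1 X2 u2 v2 s = (2 * s * (1-s) * (1-2 * s)) * hy X2 u2 v2 0 s - (s^2 * (1-s)^2) * hyd X2 u2 v2 0 s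
     + \<sigma> * (hxd X1 u1 v1 0 s * (s^3 * (1-s)^2) - hx X1 u1 v1 0 s * (s^2 * (1-s) * (3-5 * s)))"

lemma cont_J1: "continuous_on S (J1 \<sigma> X1 u1 v1 X2 u2 v2)"
  unfolding J1_def[abs_def] by (intro continuous_intros cont_hx cont_hy cont_hxd cont_hyd)

lemma Jf_split:
  "Jf X1 u1 v1 c X2 u2 v2 (\<sigma> * c) s = Jf X1 u1 v1 0 X2 u2 v2 0 s + c * J1 \<sigma> X1 u1 v1 X2 u2 v2 s
     + \<sigma> * c^2 * (- ((s^2 * (1-s)^2)^2))"
proof -
  define A where "A = hxd X1 u1 v1 0 s"
  define B where "B = hy X2 u2 v2 0 s"
  define C where "C = hx X1 u1 v1 0 s"
  define D where "D = hyd X2 u2 v2 0 s"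
  define W1 where "W1 = s^2 * (1-s)^2"
  define W1' where "W1' = 2 * s * (1-s) * (1-2 * s)"
  define W2 where "W2 = s^3 * (1-s)^2"
  define W2' where "W2' = s^2 * (1-s) * (3-5 * s)"
  have w: "W1' * W2 - W1 * W2' = - (W1^2)" unfolding W1_def W1'_def W2_def W2'_def by (rule w_ident)
  have "Jf X1 u1 v1 c X2 u2 v2 (\<sigma> * c) s = (A + c * W1') * (B + \<sigma> * c * W2) - (C + c * W1) * (D + \<sigma> * c * W2')"
    unfolding Jf_def A_def B_def C_def D_def W1_def W1'_def W2_def W2'_def
    using hsplit(1)[of X1 u1 v1 c s] hsplit(2)[of X1 u1 v1 c s] hsplit(3)[of X2 u2 v2 "\<sigma> * c" s]
      hsplit(4)[of X2 u2 v2 "\<sigma> * c" s] by (simp only:)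
  also have "\<dots> = (A * B - C * D) + c * (W1' * B - W1 * D + \<sigma> * (A * W2 - C * W2')) + \<sigma> * c^2 * (W1' * W2 - W1 * W2')"
    by (simp add: algebra_simps power2_eq_square)
  also have "\<dots> = Jf X1 u1 v1 0 X2 u2 v2 0 s + c * J1 \<sigma> X1 u1 v1 X2 u2 v2 s + \<sigma> * c^2 * (- ((s^2 * (1-s)^2)^2))"
    unfolding w unfolding Jf_def J1_def A_def B_def C_def D_def W1_def W1'_def W2_def W2'_def by simp
  finally show ?thesis .
qed

lemma int_w: "((\<lambda>s::real. (s^2 * (1-s)^2)^2) has_integral 1/630) {0..1}"
proof -
  define F where "F s = s^5/5 - 2 * s^6/3 + 6 * s^7/7 - s^8/2 + s^9/9" for s :: real
  have "((\<lambda>s::real. (s^2 * (1-s)^2)^2) has_integral F 1 - F 0) {0..1}"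
  proof (rule fundamental_theorem_of_calculus)
    fix x :: real assume "x \<in> {0..1}"
    show "(F has_vector_derivative (x^2 * (1-x)^2)^2) (at x within {0..1})"
      unfolding F_def has_real_derivative_iff_has_vector_derivative[symmetric]
      by (auto intro!: derivative_eq_intros simp: power2_eq_square power3_eq_cube algebra_simps eval_nat_numeral)
  qed simp
  moreover have "F 1 - F 0 = 1/630" by (simp add: F_def)
  ultimately show ?thesis by simp
qed

lemma area_quad:
  "area X1 u1 v1 c X2 u2 v2 (\<sigma> * c) = area X1 u1 v1 0 X2 u2 v2 0
     + c * (2 * integral {0..1} (J1 \<sigma> X1 u1 v1 X2 u2 v2)) - \<sigma> * c^2 / 315"
proof -
  have i1: "(Jf X1 u1 v1 0 X2 u2 v2 0) integrable_on {0..1}"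
    by (rule integrable_continuous_real) (rule cont_Jf)
  have i2: "(J1 \<sigma> X1 u1 v1 X2 u2 v2) integrable_on {0..1}"
    by (rule integrable_continuous_real) (rule cont_J1)
  have i3: "(\<lambda>s::real. (s^2 * (1-s)^2)^2) integrable_on {0..1}" using int_w by blast
  have "Jf X1 u1 v1 c X2 u2 v2 (\<sigma> * c) = (\<lambda>s. Jf X1 u1 v1 0 X2 u2 v2 0 s + c * J1 \<sigma> X1 u1 v1 X2 u2 v2 s
     + (- \<sigma> * c^2) * ((s^2 * (1-s)^2)^2))"
    by (rule ext) (simp add: Jf_split)
  then have "integral {0..1} (Jf X1 u1 v1 c X2 u2 v2 (\<sigma> * c)) =
     integral {0..1} (\<lambda>s. Jf X1 u1 v1 0 X2 u2 v2 0 s + c * J1 \<sigma> X1 u1 v1 X2 u2 v2 s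
     + (- \<sigma> * c^2) * ((s^2 * (1-s)^2)^2))"
    by simp
  also have "\<dots> = integral {0..1} (Jf X1 u1 v1 0 X2 u2 v2 0) + c * integral {0..1} (J1 \<sigma> X1 u1 v1 X2 u2 v2)
     + (- \<sigma> * c^2) * integral {0..1} (\<lambda>s::real. (s^2 * (1-s)^2)^2)"
    by (intro integral_unique has_integral_add has_integral_mult_right integrable_integral i1 i2 i3)
  also have "integral {0..1} (\<lambda>s::real. (s^2 * (1-s)^2)^2) = 1/630" using int_w by blast
  finally show ?thesis unfolding area_def by (simp add: algebra_simps)
qed

lemma area_solve:
  "\<exists>c1 c2. area X1 u1 v1 c1 X2 u2 v2 c2 = Z \<and>
     \<bar>c1\<bar> \<le> sqrt (315 * \<bar>Z - area X1 u1 v1 0 X2 u2 v2 0\<bar>) \<and>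
     \<bar>c2\<bar> \<le> sqrt (315 * \<bar>Z - area X1 u1 v1 0 X2 u2 v2 0\<bar>)"
proof -
  define A0 where "A0 = area X1 u1 v1 0 X2 u2 v2 0"
  define D where "D = Z - A0"
  define \<sigma> :: real where "\<sigma> = (if D \<ge> 0 then -1 else 1)"
  define l where "l = 2 * integral {0..1} (J1 \<sigma> X1 u1 v1 X2 u2 v2)"
  define C where "C = sqrt (315 * \<bar>D\<bar>)"
  define q where "q c = A0 + c * l - \<sigma> * c^2 / 315" for c
  have qa: "area X1 u1 v1 c X2 u2 v2 (\<sigma> * c) = q c" for c
    unfolding q_def A0_def l_def by (rule area_quad)
  have C2: "C^2 = 315 * \<bar>D\<bar>" unfolding C_def by simp
  have sD: "- \<sigma> * \<bar>D\<bar> = D" unfolding \<sigma>_def by auto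
  have qC: "q C = Z + l * C" and qmC: "q (-C) = Z - l * C"
    unfolding q_def using sD by (auto simp: C2 D_def algebra_simps)
  have C0: "C \<ge> 0" unfolding C_def by simp
  have cq: "continuous_on {-C..C} q" unfolding q_def by (intro continuous_intros) auto
  obtain c where c: "-C \<le> c" "c \<le> C" "q c = Z"
  proof (cases "l * C \<ge> 0")
    case True
    then show ?thesis using IVT'[of q "-C" Z C] qC qmC C0 cq that by auto
  next
    case False
    then show ?thesis using IVT2'[of q C Z "-C"] qC qmC C0 cq that by auto
  qed
  have "\<bar>\<sigma> * c\<bar> = \<bar>c\<bar>" unfolding \<sigma>_def by auto
  then show ?thesis using c qa[of c] unfolding C_def D_def A0_def
    by (intro exI[of _ c] exI[of _ "\<sigma> * c"]) auto
qed


lemma J_bound_gen: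
  fixes r1 r2 d1 d2 e1 e2 s E :: real
  assumes "\<bar>d1\<bar> \<le> E" "\<bar>e1\<bar> \<le> E" "\<bar>d2\<bar> \<le> E" "\<bar>e2\<bar> \<le> E" "0 \<le> s" "s \<le> 1"
  shows "\<bar>(r1 + d1) * (r2 * s + e2) - (r1 * s + e1) * (r2 + d2)\<bar> \<le> 2 * E * (\<bar>r1\<bar> + \<bar>r2\<bar>) + 2 * E^2"
proof -
  have E0: "E \<ge> 0" using assms(1) by simp
  have eq: "(r1 + d1) * (r2 * s + e2) - (r1 * s + e1) * (r2 + d2) =
      r1 * e2 + (d1 * r2) * s + d1 * e2 - (r1 * d2) * s - e1 * r2 - e1 * d2"
    by (simp add: algebra_simps)
  have t1: "\<bar>r1 * e2\<bar> \<le> \<bar>r1\<bar> * E" using assms by (simp add: abs_mult mult_left_mono)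
  have t2: "\<bar>(d1 * r2) * s\<bar> \<le> E * \<bar>r2\<bar>"
  proof -
    have "\<bar>(d1 * r2) * s\<bar> = \<bar>d1\<bar> * \<bar>r2\<bar> * s" using assms by (simp add: abs_mult)
    also have "\<dots> \<le> E * \<bar>r2\<bar> * 1" using assms E0 by (intro mult_mono) (auto intro: mult_right_mono)
    finally show ?thesis by simp
  qed
  have t3: "\<bar>d1 * e2\<bar> \<le> E * E" using assms E0 by (simp add: abs_mult mult_mono)
  have t4: "\<bar>(r1 * d2) * s\<bar> \<le> \<bar>r1\<bar> * E"
  proof -
    have "\<bar>(r1 * d2) * s\<bar> = \<bar>r1\<bar> * \<bar>d2\<bar> * s" using assms by (simp add: abs_mult)
    also have "\<dots> \<le> \<bar>r1\<bar> * E * 1" using assms E0 by (intro mult_mono) (auto intro: mult_left_mono)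
    finally show ?thesis by simp
  qed
  have t5: "\<bar>e1 * r2\<bar> \<le> E * \<bar>r2\<bar>" using assms by (simp add: abs_mult mult_right_mono)
  have t6: "\<bar>e1 * d2\<bar> \<le> E * E" using assms E0 by (simp add: abs_mult mult_mono)
  have "\<bar>r1 * e2 + (d1 * r2) * s + d1 * e2 - (r1 * d2) * s - e1 * r2 - e1 * d2\<bar>
      \<le> \<bar>r1\<bar> * E + E * \<bar>r2\<bar> + E * E + \<bar>r1\<bar> * E + E * \<bar>r2\<bar> + E * E"
    using t1 t2 t3 t4 t5 t6 by linarith
  also have "\<dots> = 2 * E * (\<bar>r1\<bar> + \<bar>r2\<bar>) + 2 * E^2" by (simp add: algebra_simps power2_eq_square)
  finally show ?thesis unfolding eq .
qed

lemma A0_bound: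
  assumes "\<bar>X1 - r1\<bar> \<le> \<eta>" "\<bar>u1 - r1\<bar> \<le> \<eta>" "\<bar>v1 - r1\<bar> \<le> \<eta>"
    "\<bar>X2 - r2\<bar> \<le> \<eta>" "\<bar>u2 - r2\<bar> \<le> \<eta>" "\<bar>v2 - r2\<bar> \<le> \<eta>"
  shows "\<bar>area X1 u1 v1 0 X2 u2 v2 0\<bar> \<le> 4 * (9 * \<eta>) * (\<bar>r1\<bar> + \<bar>r2\<bar>) + 4 * (9 * \<eta>)^2"
proof -
  define E where "E = 9 * \<eta>"
  have "\<eta> \<ge> 0" using assms(1) by simp
  have pt: "\<bar>Jf X1 u1 v1 0 X2 u2 v2 0 s\<bar> \<le> 2 * E * (\<bar>r1\<bar> + \<bar>r2\<bar>) + 2 * E^2" if s: "s \<in> {0..1}" for s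
  proof -
    have s01: "0 \<le> s" "s \<le> 1" using s by auto
    define d1 where "d1 = hxd X1 u1 v1 0 s - r1"
    define e1 where "e1 = hx X1 u1 v1 0 s - r1 * s"
    define d2 where "d2 = hyd X2 u2 v2 0 s - r2"
    define e2 where "e2 = hy X2 u2 v2 0 s - r2 * s"
    have "\<bar>d1\<bar> \<le> E" unfolding d1_def E_def using hxd_bound[OF s01, of X1 u1 v1 0 r1] assms by simp
    moreover have "\<bar>d2\<bar> \<le> E" unfolding d2_def E_def using hyd_bound[OF s01, of X2 u2 v2 0 r2] assms by simp
    moreover have "\<bar>e1\<bar> \<le> E" unfolding e1_def E_def using hx_bound[OF s01, of X1 u1 v1 0 r1] assms \<open>\<eta>\<ge>0\<close> by simp
    moreover have "\<bar>e2\<bar> \<le> E" unfolding e2_def E_def using hy_bound[OF s01, of X2 u2 v2 0 r2] assms \<open>\<eta>\<ge>0\<close> by simp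
    ultimately have "\<bar>(r1 + d1) * (r2 * s + e2) - (r1 * s + e1) * (r2 + d2)\<bar> \<le> 2 * E * (\<bar>r1\<bar> + \<bar>r2\<bar>) + 2 * E^2"
      using s01 by (intro J_bound_gen) auto
    then show ?thesis unfolding Jf_def d1_def e1_def d2_def e2_def by simp
  qed
  have hi: "(Jf X1 u1 v1 0 X2 u2 v2 0 has_integral integral {0..1} (Jf X1 u1 v1 0 X2 u2 v2 0)) (cbox 0 1)"
    using integrable_continuous_real[OF cont_Jf] by (simp add: integrable_integral)
  have "norm (integral {0..1} (Jf X1 u1 v1 0 X2 u2 v2 0)) \<le> (2 * E * (\<bar>r1\<bar> + \<bar>r2\<bar>) + 2 * E^2) * Henstock_Kurzweil_Integration.content (cbox (0::real) 1)"
    by (rule has_integral_bound[OF _ hi]) (use pt \<open>\<eta>\<ge>0\<close> in \<open>auto simp: E_def\<close>)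
  then show ?thesis unfolding area_def E_def by (simp add: abs_mult)
qed

lemma NS:
  fixes r1 r2 \<epsilon> :: real
  assumes "\<epsilon> > 0"
  obtains \<eta> where "\<eta> > 0" "\<eta> \<le> \<epsilon>"
    "\<And>X1 u1 v1 X2 u2 v2 Z c1 c2 s. \<bar>X1 - r1\<bar> \<le> \<eta> \<Longrightarrow> \<bar>u1 - r1\<bar> \<le> \<eta> \<Longrightarrow> \<bar>v1 - r1\<bar> \<le> \<eta> \<Longrightarrow>
      \<bar>X2 - r2\<bar> \<le> \<eta> \<Longrightarrow> \<bar>u2 - r2\<bar> \<le> \<eta> \<Longrightarrow> \<bar>v2 - r2\<bar> \<le> \<eta> \<Longrightarrow> \<bar>Z\<bar> \<le> \<eta> \<Longrightarrow>
      \<bar>c1\<bar> \<le> sqrt (315 * \<bar>Z - area X1 u1 v1 0 X2 u2 v2 0\<bar>) \<Longrightarrow>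
      \<bar>c2\<bar> \<le> sqrt (315 * \<bar>Z - area X1 u1 v1 0 X2 u2 v2 0\<bar>) \<Longrightarrow> 0 \<le> s \<Longrightarrow> s \<le> 1 \<Longrightarrow>
      \<bar>hxd X1 u1 v1 c1 s - r1\<bar> \<le> \<epsilon> \<and> \<bar>hyd X2 u2 v2 c2 s - r2\<bar> \<le> \<epsilon>"
proof -
  define R where "R = \<bar>r1\<bar> + \<bar>r2\<bar>"
  define K where "K = 315 * (1 + 36 * R + 324)"
  have K: "K > 0" unfolding K_def R_def by simp
  define \<eta> where "\<eta> = min 1 (min (\<epsilon> / 18) ((\<epsilon> / 6)^2 / K))"
  have \<eta>0: "\<eta> > 0" using assms K by (simp add: \<eta>_def)
  have \<eta>1: "\<eta> \<le> 1" "\<eta> \<le> \<epsilon> / 18" "\<eta> \<le> (\<epsilon> / 6)^2 / K" unfolding \<eta>_def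
    by (rule min.cobounded1, rule order_trans[OF min.cobounded2 min.cobounded1],
        rule order_trans[OF min.cobounded2 min.cobounded2])
  show ?thesis
  proof (rule that[OF \<eta>0])
    show "\<eta> \<le> \<epsilon>" using \<eta>1 assms by linarith
    fix X1 u1 v1 X2 u2 v2 Z c1 c2 s :: real
    assume h: "\<bar>X1 - r1\<bar> \<le> \<eta>" "\<bar>u1 - r1\<bar> \<le> \<eta>" "\<bar>v1 - r1\<bar> \<le> \<eta>"
      "\<bar>X2 - r2\<bar> \<le> \<eta>" "\<bar>u2 - r2\<bar> \<le> \<eta>" "\<bar>v2 - r2\<bar> \<le> \<eta>" "\<bar>Z\<bar> \<le> \<eta>"
      and hc: "\<bar>c1\<bar> \<le> sqrt (315 * \<bar>Z - area X1 u1 v1 0 X2 u2 v2 0\<bar>)"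
      "\<bar>c2\<bar> \<le> sqrt (315 * \<bar>Z - area X1 u1 v1 0 X2 u2 v2 0\<bar>)" and s: "0 \<le> s" "s \<le> 1"
    have A0: "\<bar>area X1 u1 v1 0 X2 u2 v2 0\<bar> \<le> 4 * (9 * \<eta>) * R + 4 * (9 * \<eta>)^2"
      unfolding R_def by (rule A0_bound[OF h(1-6)])
    have "\<eta>^2 \<le> \<eta>" using \<eta>0 \<eta>1 by (simp add: power2_eq_square mult_left_le)
    then have "324 * \<eta>^2 \<le> 324 * \<eta>" by simp
    moreover have "4 * (9 * \<eta>) * R + 4 * (9 * \<eta>)^2 = 36 * \<eta> * R + 324 * \<eta>^2"
      by (simp add: power2_eq_square)
    moreover have "\<bar>Z - area X1 u1 v1 0 X2 u2 v2 0\<bar> \<le> \<bar>Z\<bar> + \<bar>area X1 u1 v1 0 X2 u2 v2 0\<bar>"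
      by (rule abs_triangle_ineq4)
    ultimately have "\<bar>Z - area X1 u1 v1 0 X2 u2 v2 0\<bar> \<le> \<eta> + 36 * \<eta> * R + 324 * \<eta>"
      using A0 h(7) by linarith
    then have "\<bar>Z - area X1 u1 v1 0 X2 u2 v2 0\<bar> \<le> \<eta> * (1 + 36 * R + 324)"
      by (simp add: algebra_simps)
    then have "315 * \<bar>Z - area X1 u1 v1 0 X2 u2 v2 0\<bar> \<le> 315 * (\<eta> * (1 + 36 * R + 324))"
      by (rule mult_left_mono) simp
    also have "\<dots> = \<eta> * K" unfolding K_def by (simp add: algebra_simps)
    finally have "315 * \<bar>Z - area X1 u1 v1 0 X2 u2 v2 0\<bar> \<le> \<eta> * K" .
    also have "\<dots> \<le> (\<epsilon> / 6)^2" using \<eta>1(3) K by (simp add: field_simps)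
    finally have "sqrt (315 * \<bar>Z - area X1 u1 v1 0 X2 u2 v2 0\<bar>) \<le> \<epsilon> / 6"
      using assms by (metis abs_of_pos divide_pos_pos real_sqrt_abs real_sqrt_le_mono zero_less_numeral)
    then have c: "\<bar>c1\<bar> \<le> \<epsilon> / 6" "\<bar>c2\<bar> \<le> \<epsilon> / 6" using hc by auto
    have "\<bar>hxd X1 u1 v1 c1 s - r1\<bar> \<le> 3 * (\<bar>X1 - r1\<bar> + \<bar>u1 - r1\<bar> + \<bar>v1 - r1\<bar> + \<bar>c1\<bar>)"
      by (rule hxd_bound[OF s])
    also have "\<dots> \<le> 3 * (3 * (\<epsilon> / 18) + \<epsilon> / 6)" using h c \<eta>1 by simp
    finally have 1: "\<bar>hxd X1 u1 v1 c1 s - r1\<bar> \<le> \<epsilon>" by simp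
    have "\<bar>hyd X2 u2 v2 c2 s - r2\<bar> \<le> 3 * (\<bar>X2 - r2\<bar> + \<bar>u2 - r2\<bar> + \<bar>v2 - r2\<bar> + \<bar>c2\<bar>)"
      by (rule hyd_bound[OF s])
    also have "\<dots> \<le> 3 * (3 * (\<epsilon> / 18) + \<epsilon> / 6)" using h c \<eta>1 by simp
    finally have 2: "\<bar>hyd X2 u2 v2 c2 s - r2\<bar> \<le> \<epsilon>" by simp
    show "\<bar>hxd X1 u1 v1 c1 s - r1\<bar> \<le> \<epsilon> \<and> \<bar>hyd X2 u2 v2 c2 s - r2\<bar> \<le> \<epsilon>" using 1 2 by simp
  qed
qed


locale whit =
  fixes K :: "real set" and \<gamma> p :: "real \<Rightarrow> real \<times> real \<times> real"
  assumes cK: "compact K" and neK: "K \<noteq> {}"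
    and hp: "\<forall>a\<in>K. horizontal_point (p a)"
    and hyp: "\<forall>\<epsilon>>0. \<exists>\<delta>>0. \<forall>a\<in>K. \<forall>b\<in>K. 0 < \<bar>b - a\<bar> \<and> \<bar>b - a\<bar> < \<delta> \<longrightarrow>
          norm (hdil (1 / (b - a)) (hmult (hinv (\<gamma> a)) (\<gamma> b)) - p a) < \<epsilon>"
begin

definition "g1 t = fst (\<gamma> t)"
definition "g2 t = fst (snd (\<gamma> t))"
definition "g3 t = snd (snd (\<gamma> t))"
definition "q1 t = fst (p t)"
definition "q2 t = fst (snd (p t))"

lemma \<gamma>_eq: "\<gamma> t = (g1 t, g2 t, g3 t)" by (simp add: g1_def g2_def g3_def)

lemma hypc:
  assumes "\<epsilon> > 0"
  obtains \<delta> where "\<delta> > 0" "\<And>a b. a \<in> K \<Longrightarrow> b \<in> K \<Longrightarrow> 0 < \<bar>b - a\<bar> \<Longrightarrow> \<bar>b - a\<bar> < \<delta> \<Longrightarrow>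
     \<bar>(g1 b - g1 a) / (b - a) - q1 a\<bar> < \<epsilon> \<and> \<bar>(g2 b - g2 a) / (b - a) - q2 a\<bar> < \<epsilon> \<and>
     \<bar>(g3 b - g3 a + 2 * (g1 a * g2 b - g2 a * g1 b)) / (b - a)^2\<bar> < \<epsilon> \<and>
     \<bar>q1 a - q1 b\<bar> < 2 * \<epsilon> \<and> \<bar>q2 a - q2 b\<bar> < 2 * \<epsilon>"
proof -
  obtain \<delta> where \<delta>: "\<delta> > 0" and H: "\<forall>a\<in>K. \<forall>b\<in>K. 0 < \<bar>b - a\<bar> \<and> \<bar>b - a\<bar> < \<delta> \<longrightarrow>
          norm (hdil (1 / (b - a)) (hmult (hinv (\<gamma> a)) (\<gamma> b)) - p a) < \<epsilon>"
    using hyp assms by blast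
  have comp: "\<bar>(g1 b - g1 a) / (b - a) - q1 a\<bar> < \<epsilon> \<and> \<bar>(g2 b - g2 a) / (b - a) - q2 a\<bar> < \<epsilon> \<and>
     \<bar>(g3 b - g3 a + 2 * (g1 a * g2 b - g2 a * g1 b)) / (b - a)^2\<bar> < \<epsilon>"
    if "a \<in> K" "b \<in> K" "0 < \<bar>b - a\<bar>" "\<bar>b - a\<bar> < \<delta>" for a b
  proof -
    have pa: "p a = (q1 a, q2 a, 0)" using hp that(1)
      by (auto simp: q1_def q2_def horizontal_point_def prod_eq_iff)
    have "hdil (1 / (b - a)) (hmult (hinv (\<gamma> a)) (\<gamma> b)) - p a =
      ((g1 b - g1 a) / (b - a) - q1 a, (g2 b - g2 a) / (b - a) - q2 a,
       (g3 b - g3 a + 2 * (g1 a * g2 b - g2 a * g1 b)) / (b - a)^2)"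
      unfolding \<gamma>_eq[of a] \<gamma>_eq[of b] Q_eq pa by simp
    moreover have "norm (hdil (1 / (b - a)) (hmult (hinv (\<gamma> a)) (\<gamma> b)) - p a) < \<epsilon>"
      using H that by blast
    ultimately have n: "norm ((g1 b - g1 a) / (b - a) - q1 a, (g2 b - g2 a) / (b - a) - q2 a,
       (g3 b - g3 a + 2 * (g1 a * g2 b - g2 a * g1 b)) / (b - a)^2) < \<epsilon>" by simp
    show ?thesis using order.strict_trans1[OF norm3_ge(1) n] order.strict_trans1[OF norm3_ge(2) n]
      order.strict_trans1[OF norm3_ge(3) n] by blast
  qed
  show ?thesis
  proof (rule that[OF \<delta>])
    fix a b assume ab: "a \<in> K" "b \<in> K" "0 < \<bar>b - a\<bar>" "\<bar>b - a\<bar> < \<delta>"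
    have ba: "0 < \<bar>a - b\<bar>" "\<bar>a - b\<bar> < \<delta>" using ab by auto
    have 1: "(g1 a - g1 b) / (a - b) = (g1 b - g1 a) / (b - a)" "(g2 a - g2 b) / (a - b) = (g2 b - g2 a) / (b - a)"
      by (metis minus_diff_eq minus_divide_divide)+
    from comp[OF ab] comp[OF ab(2,1) ba] show "\<bar>(g1 b - g1 a) / (b - a) - q1 a\<bar> < \<epsilon> \<and> \<bar>(g2 b - g2 a) / (b - a) - q2 a\<bar> < \<epsilon> \<and>
     \<bar>(g3 b - g3 a + 2 * (g1 a * g2 b - g2 a * g1 b)) / (b - a)^2\<bar> < \<epsilon> \<and>
     \<bar>q1 a - q1 b\<bar> < 2 * \<epsilon> \<and> \<bar>q2 a - q2 b\<bar> < 2 * \<epsilon>"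
      unfolding 1 by linarith
  qed
qed

definition "m = Inf K"
definition "M = Sup K"

lemma bddK: "bdd_below K" "bdd_above K"
  using compact_imp_bounded[OF cK] bounded_imp_bdd_below bounded_imp_bdd_above by auto

lemma closedK: "closed K" using cK compact_imp_closed by auto

lemma mM: "m \<in> K" "M \<in> K" "\<And>x. x \<in> K \<Longrightarrow> m \<le> x" "\<And>x. x \<in> K \<Longrightarrow> x \<le> M" "m \<le> M"
proof -
  show "m \<in> K" unfolding m_def by (rule closed_contains_Inf[OF neK bddK(1) closedK])
  show "M \<in> K" unfolding M_def by (rule closed_contains_Sup[OF neK bddK(2) closedK])
  show "\<And>x. x \<in> K \<Longrightarrow> m \<le> x" unfolding m_def by (rule cInf_lower[OF _ bddK(1)])
  show "\<And>x. x \<in> K \<Longrightarrow> x \<le> M" unfolding M_def by (rule cSup_upper[OF _ bddK(2)])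
  then show "m \<le> M" using \<open>m \<in> K\<close> by blast
qed

definition "la t = Sup (K \<inter> {..t})"
definition "rb t = Inf (K \<inter> {t..})"

definition "gap a b \<longleftrightarrow> a \<in> K \<and> b \<in> K \<and> a < b \<and> (\<forall>x. a < x \<and> x < b \<longrightarrow> x \<notin> K)"

lemma la_props:
  assumes "m \<le> t"
  shows "la t \<in> K" "la t \<le> t" "\<And>x. x \<in> K \<Longrightarrow> x \<le> t \<Longrightarrow> x \<le> la t"
proof -
  have ne: "K \<inter> {..t} \<noteq> {}" using mM(1) assms by auto
  have bd: "bdd_above (K \<inter> {..t})" by auto
  have cl: "closed (K \<inter> {..t})" using closedK by (intro closed_Int) auto
  have "la t \<in> K \<inter> {..t}" unfolding la_def by (rule closed_contains_Sup[OF ne bd cl])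
  then show "la t \<in> K" "la t \<le> t" by auto
  show "\<And>x. x \<in> K \<Longrightarrow> x \<le> t \<Longrightarrow> x \<le> la t" unfolding la_def by (rule cSup_upper) (use bd in auto)
qed

lemma rb_props:
  assumes "t \<le> M"
  shows "rb t \<in> K" "t \<le> rb t" "\<And>x. x \<in> K \<Longrightarrow> t \<le> x \<Longrightarrow> rb t \<le> x"
proof -
  have ne: "K \<inter> {t..} \<noteq> {}" using mM(2) assms by auto
  have bd: "bdd_below (K \<inter> {t..})" by auto
  have cl: "closed (K \<inter> {t..})" using closedK by (intro closed_Int) auto
  have "rb t \<in> K \<inter> {t..}" unfolding rb_def by (rule closed_contains_Inf[OF ne bd cl])
  then show "rb t \<in> K" "t \<le> rb t" by auto
  show "\<And>x. x \<in> K \<Longrightarrow> t \<le> x \<Longrightarrow> rb t \<le> x" unfolding rb_def by (rule cInf_lower) (use bd in auto)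
qed

lemma gap_of:
  assumes "m \<le> t" "t \<le> M" "t \<notin> K"
  shows "gap (la t) (rb t)" "la t < t" "t < rb t"
proof -
  have l: "la t \<in> K" "la t \<le> t" "\<And>x. x \<in> K \<Longrightarrow> x \<le> t \<Longrightarrow> x \<le> la t" using la_props assms by auto
  have r: "rb t \<in> K" "t \<le> rb t" "\<And>x. x \<in> K \<Longrightarrow> t \<le> x \<Longrightarrow> rb t \<le> x" using rb_props assms by auto
  show lt: "la t < t" using l assms(3) by (metis order_le_less)
  show rt: "t < rb t" using r assms(3) by (metis order_le_less)
  show "gap (la t) (rb t)" unfolding gap_def
  proof (intro conjI allI impI)
    fix x assume x: "la t < x \<and> x < rb t"
    show "x \<notin> K"
    proof
      assume "x \<in> K"
      show False
      proof (cases "x \<le> t")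
        case True then show False using l(3)[OF \<open>x \<in> K\<close>] x by linarith
      next
        case False then show False using r(3)[OF \<open>x \<in> K\<close>] x by linarith
      qed
    qed
  qed (use l r lt rt in auto)
qed

lemma gap_bounds: "gap a b \<Longrightarrow> m \<le> a \<and> b \<le> M" unfolding gap_def using mM by auto

lemma gap_unique:
  assumes "gap a b" "a < t" "t < b"
  shows "la t = a" "rb t = b" "t \<notin> K"
proof -
  have g: "a \<in> K" "b \<in> K" "\<forall>x. a < x \<and> x < b \<longrightarrow> x \<notin> K" using assms(1) unfolding gap_def by auto
  show tK: "t \<notin> K" using g assms by auto
  have mt: "m \<le> t" "t \<le> M" using gap_bounds[OF assms(1)] assms by auto
  have "a \<le> la t" using la_props(3)[OF mt(1) g(1)] assms by simp
  moreover have "la t \<le> a"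
  proof (rule ccontr)
    assume "\<not> la t \<le> a"
    then have "a < la t" "la t < b" using la_props(2)[OF mt(1)] assms by auto
    then show False using g(3) la_props(1)[OF mt(1)] by auto
  qed
  ultimately show "la t = a" by simp
  have "rb t \<le> b" using rb_props(3)[OF mt(2) g(2)] assms by simp
  moreover have "b \<le> rb t"
  proof (rule ccontr)
    assume "\<not> b \<le> rb t"
    then have "rb t < b" "a < rb t" using rb_props(2)[OF mt(2)] assms by auto
    then show False using g(3) rb_props(1)[OF mt(2)] by auto
  qed
  ultimately show "rb t = b" by simp
qed

end

context whit begin

definition "DX1 a b = (g1 b - g1 a) / (b - a)"
definition "DX2 a b = (g2 b - g2 a) / (b - a)"
definition "DZ a b = (g3 b - g3 a + 2 * (g1 a * g2 b - g2 a * g1 b)) / (b - a)^2"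
definition "A00 a b = area (DX1 a b) (q1 a) (q1 b) 0 (DX2 a b) (q2 a) (q2 b) 0"
definition "corr a b = (SOME cc. area (DX1 a b) (q1 a) (q1 b) (fst cc) (DX2 a b) (q2 a) (q2 b) (snd cc) = DZ a b \<and>
     \<bar>fst cc\<bar> \<le> sqrt (315 * \<bar>DZ a b - A00 a b\<bar>) \<and> \<bar>snd cc\<bar> \<le> sqrt (315 * \<bar>DZ a b - A00 a b\<bar>))"
definition "cc1 a b = fst (corr a b)"
definition "cc2 a b = snd (corr a b)"

lemma corr_prop:
  "area (DX1 a b) (q1 a) (q1 b) (cc1 a b) (DX2 a b) (q2 a) (q2 b) (cc2 a b) = DZ a b"
  "\<bar>cc1 a b\<bar> \<le> sqrt (315 * \<bar>DZ a b - A00 a b\<bar>)" "\<bar>cc2 a b\<bar> \<le> sqrt (315 * \<bar>DZ a b - A00 a b\<bar>)"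
proof -
  have "\<exists>cc. area (DX1 a b) (q1 a) (q1 b) (fst cc) (DX2 a b) (q2 a) (q2 b) (snd cc) = DZ a b \<and>
     \<bar>fst cc\<bar> \<le> sqrt (315 * \<bar>DZ a b - A00 a b\<bar>) \<and> \<bar>snd cc\<bar> \<le> sqrt (315 * \<bar>DZ a b - A00 a b\<bar>)"
    using area_solve[of "DX1 a b" "q1 a" "q1 b" "DX2 a b" "q2 a" "q2 b" "DZ a b"] unfolding A00_def by auto
  from someI_ex[OF this] show
    "area (DX1 a b) (q1 a) (q1 b) (cc1 a b) (DX2 a b) (q2 a) (q2 b) (cc2 a b) = DZ a b"
    "\<bar>cc1 a b\<bar> \<le> sqrt (315 * \<bar>DZ a b - A00 a b\<bar>)" "\<bar>cc2 a b\<bar> \<le> sqrt (315 * \<bar>DZ a b - A00 a b\<bar>)"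
    unfolding cc1_def cc2_def corr_def by auto
qed

definition "fx a b = hx (DX1 a b) (q1 a) (q1 b) (cc1 a b)"
definition "fxd a b = hxd (DX1 a b) (q1 a) (q1 b) (cc1 a b)"
definition "fy a b = hy (DX2 a b) (q2 a) (q2 b) (cc2 a b)"
definition "fyd a b = hyd (DX2 a b) (q2 a) (q2 b) (cc2 a b)"
definition "JJ a b = Jf (DX1 a b) (q1 a) (q1 b) (cc1 a b) (DX2 a b) (q2 a) (q2 b) (cc2 a b)"
definition "alpha a b s = 2 * integral {0..s} (JJ a b)"
definition sg :: "real \<Rightarrow> real \<Rightarrow> real \<Rightarrow> real" where "sg a b t = (t - a) / (b - a)"

definition "PF a b t = g1 a + (b - a) * fx a b (sg a b t)"
definition "PG a b t = g2 a + (b - a) * fy a b (sg a b t)"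
definition "PE a b t = g3 a + 2 * g2 a * (PF a b t - g1 a) - 2 * g1 a * (PG a b t - g2 a)
   + (b - a)^2 * alpha a b (sg a b t)"

lemma JJ_eq: "JJ a b s = fxd a b s * fy a b s - fx a b s * fyd a b s"
  by (simp add: JJ_def Jf_def fxd_def fy_def fx_def fyd_def)

lemma alpha_1: "alpha a b 1 = DZ a b"
  using corr_prop(1)[of a b] by (simp add: alpha_def area_def JJ_def)

lemma alpha_0: "alpha a b 0 = 0" by (simp add: alpha_def)

lemma alpha_deriv:
  assumes "s \<in> {0..1}"
  shows "(alpha a b has_real_derivative 2 * JJ a b s) (at s within {0..1})"
proof -
  have "((\<lambda>x. integral {0..x} (JJ a b)) has_real_derivative JJ a b s) (at s within {0..1})"
    by (rule integral_has_real_derivative[OF _ assms]) (simp add: JJ_def cont_Jf)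
  from DERIV_cmult[OF this, of 2] show ?thesis unfolding alpha_def[abs_def] .
qed

lemma alpha_cont: "continuous_on {0..1} (alpha a b)"
  using alpha_deriv by (meson DERIV_continuous continuous_on_eq_continuous_within)

lemma sg_deriv: "(sg a b has_real_derivative 1 / (b - a)) (at t within S)"
proof -
  have "((\<lambda>t. (t - a) * (1 / (b - a))) has_real_derivative (1 - 0) * (1 / (b - a))) (at t within S)"
    by (rule DERIV_cmult_right[OF DERIV_diff[OF DERIV_ident DERIV_const]])
  then show ?thesis unfolding sg_def[abs_def] by simp
qed

lemma PF_deriv:
  assumes "a < b" shows "(PF a b has_real_derivative fxd a b (sg a b t)) (at t within S)"
proof -
  have "((\<lambda>t. fx a b (sg a b t)) has_real_derivative fxd a b (sg a b t) * (1 / (b - a))) (at t within S)"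
    unfolding fx_def fxd_def by (rule DERIV_chain2[OF hx_deriv sg_deriv])
  then have "(PF a b has_real_derivative 0 + (b - a) * (fxd a b (sg a b t) * (1 / (b - a)))) (at t within S)"
    unfolding PF_def[abs_def] by (rule DERIV_add[OF DERIV_const DERIV_cmult])
  then show ?thesis using assms by simp
qed

lemma PG_deriv:
  assumes "a < b" shows "(PG a b has_real_derivative fyd a b (sg a b t)) (at t within S)"
proof -
  have "((\<lambda>t. fy a b (sg a b t)) has_real_derivative fyd a b (sg a b t) * (1 / (b - a))) (at t within S)"
    unfolding fy_def fyd_def by (rule DERIV_chain2[OF hy_deriv sg_deriv])
  then have "(PG a b has_real_derivative 0 + (b - a) * (fyd a b (sg a b t) * (1 / (b - a)))) (at t within S)"
    unfolding PG_def[abs_def] by (rule DERIV_add[OF DERIV_const DERIV_cmult])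
  then show ?thesis using assms by simp
qed

lemma sg_range: "a < b \<Longrightarrow> a < t \<Longrightarrow> t < b \<Longrightarrow> sg a b t \<in> {0<..<1}"
proof -
  assume h: "a < b" "a < t" "t < b"
  then have "0 < (t - a) / (b - a)" by (intro divide_pos_pos) auto
  moreover have "(t - a) / (b - a) < 1" using h by (subst divide_less_eq_1_pos) auto
  ultimately show ?thesis by (simp add: sg_def)
qed

lemma PE_deriv:
  assumes "a < b" "a < t" "t < b"
  shows "(PE a b has_real_derivative 2 * (fxd a b (sg a b t) * PG a b t - PF a b t * fyd a b (sg a b t))) (at t)"
proof -
  have s: "sg a b t \<in> {0<..<1}" using sg_range assms by blast
  have "(alpha a b has_real_derivative 2 * JJ a b (sg a b t)) (at (sg a b t))"
  proof -
    have "(alpha a b has_real_derivative 2 * JJ a b (sg a b t)) (at (sg a b t) within {0..1})"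
      using alpha_deriv s by auto
    moreover have "at (sg a b t) within {0..1} = at (sg a b t)"
      using s by (intro at_within_interior) auto
    ultimately show ?thesis by simp
  qed
  then have da: "((\<lambda>t. alpha a b (sg a b t)) has_real_derivative 2 * JJ a b (sg a b t) * (1 / (b - a))) (at t)"
    using DERIV_chain2 sg_deriv by blast
  have d1: "((\<lambda>t. 2 * g2 a * (PF a b t - g1 a)) has_real_derivative 2 * g2 a * (fxd a b (sg a b t) - 0)) (at t)"
    by (rule DERIV_cmult[OF DERIV_diff[OF PF_deriv[OF assms(1)] DERIV_const]])
  have d2: "((\<lambda>t. 2 * g1 a * (PG a b t - g2 a)) has_real_derivative 2 * g1 a * (fyd a b (sg a b t) - 0)) (at t)"
    by (rule DERIV_cmult[OF DERIV_diff[OF PG_deriv[OF assms(1)] DERIV_const]])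
  have d3: "((\<lambda>t. (b - a)^2 * alpha a b (sg a b t)) has_real_derivative (b - a)^2 * (2 * JJ a b (sg a b t) * (1 / (b - a)))) (at t)"
    by (rule DERIV_cmult[OF da])
  have "(PE a b has_real_derivative 0 + 2 * g2 a * (fxd a b (sg a b t) - 0) - 2 * g1 a * (fyd a b (sg a b t) - 0)
      + (b - a)^2 * (2 * JJ a b (sg a b t) * (1 / (b - a)))) (at t)"
    unfolding PE_def[abs_def]
    by (rule DERIV_add[OF DERIV_diff[OF DERIV_add[OF DERIV_const d1] d2] d3])
  moreover have "0 + 2 * g2 a * (fxd a b (sg a b t) - 0) - 2 * g1 a * (fyd a b (sg a b t) - 0)
      + (b - a)^2 * (2 * JJ a b (sg a b t) * (1 / (b - a))) =
      2 * (fxd a b (sg a b t) * PG a b t - PF a b t * fyd a b (sg a b t))"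
    using assms(1) by (simp add: JJ_eq PF_def PG_def power2_eq_square field_simps)
  ultimately show ?thesis by simp
qed

lemma PE_cont:
  assumes "a < b"
  shows "continuous_on {a..b} (PE a b)"
proof -
  have "continuous_on {a..b} (\<lambda>t. alpha a b (sg a b t))"
  proof (rule continuous_on_compose2[OF alpha_cont])
    show "continuous_on {a..b} (sg a b)" unfolding sg_def using assms by (intro continuous_intros) auto
    show "sg a b ` {a..b} \<subseteq> {0..1}" using assms by (auto simp: sg_def divide_le_eq_1)
  qed
  moreover have "continuous_on {a..b} (PF a b)" "continuous_on {a..b} (PG a b)"
    using PF_deriv[OF assms] PG_deriv[OF assms]
    by (meson DERIV_continuous continuous_at_imp_continuous_on)+
  ultimately show ?thesis unfolding PE_def[abs_def] by (intro continuous_intros)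
qed

lemma P_ends:
  assumes "a < b"
  shows "PF a b a = g1 a" "PF a b b = g1 b" "PG a b a = g2 a" "PG a b b = g2 b"
    "PE a b a = g3 a" "PE a b b = g3 b"
proof -
  have s: "sg a b a = 0" "sg a b b = 1" using assms by (auto simp: sg_def)
  show pa: "PF a b a = g1 a" "PG a b a = g2 a" unfolding PF_def PG_def s fx_def fy_def hx_vals hy_vals by simp_all
  show pb: "PF a b b = g1 b" "PG a b b = g2 b" unfolding PF_def PG_def s fx_def fy_def hx_vals hy_vals
    using assms by (simp_all add: DX1_def DX2_def)
  show "PE a b a = g3 a" unfolding PE_def pa s alpha_0 by simp
  have "(b - a)^2 * DZ a b = g3 b - g3 a + 2 * (g1 a * g2 b - g2 a * g1 b)"
    unfolding DZ_def using assms by simp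
  then show "PE a b b = g3 b" unfolding PE_def pb s alpha_1 by (simp add: algebra_simps)
qed

end

lemma isCont_local:
  assumes "open S" "t \<in> S" "\<And>x. x \<in> S \<Longrightarrow> f x = g x" "isCont g t"
  shows "isCont f t"
proof -
  have "(g \<longlongrightarrow> g t) (at t)" using assms(4) by (simp add: isCont_def)
  then have "(f \<longlongrightarrow> g t) (at t)"
    by (rule Lim_transform_within_open[OF _ assms(1,2)]) (use assms(3) in auto)
  then show ?thesis using assms(2,3) by (simp add: isCont_def)
qed

lemma deriv_at_K:
  fixes Y Yd :: "real \<Rightarrow> real" and K :: "real set"
  assumes cK: "c \<in> K" and cont: "isCont Yd c"
    and KK: "\<And>\<epsilon>. \<epsilon> > 0 \<Longrightarrow> \<exists>\<delta>>0. \<forall>a\<in>K. \<bar>a - c\<bar> < \<delta> \<longrightarrow> \<bar>Y a - Y c - Yd c * (a - c)\<bar> \<le> \<epsilon> * \<bar>a - c\<bar>"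
    and PR: "\<And>t. t \<notin> K \<Longrightarrow> c < t \<Longrightarrow> \<exists>a'\<in>K. c \<le> a' \<and> a' < t \<and> (\<exists>\<xi>. a' < \<xi> \<and> \<xi> < t \<and> Y t - Y a' = Yd \<xi> * (t - a'))"
    and PL: "\<And>t. t \<notin> K \<Longrightarrow> t < c \<Longrightarrow> \<exists>b'\<in>K. t < b' \<and> b' \<le> c \<and> (\<exists>\<xi>. t < \<xi> \<and> \<xi> < b' \<and> Y b' - Y t = Yd \<xi> * (b' - t))"
  shows "(Y has_real_derivative Yd c) (at c)"
  unfolding has_field_derivative_iff LIM_eq
proof (intro allI impI)
  fix r :: real assume "r > 0"
  define \<epsilon> where "\<epsilon> = r / 2"
  have \<epsilon>: "\<epsilon> > 0" "\<epsilon> < r" using \<open>r>0\<close> by (auto simp: \<epsilon>_def)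
  obtain \<delta>1 where \<delta>1: "\<delta>1 > 0" "\<forall>a\<in>K. \<bar>a - c\<bar> < \<delta>1 \<longrightarrow> \<bar>Y a - Y c - Yd c * (a - c)\<bar> \<le> \<epsilon> * \<bar>a - c\<bar>"
    using KK[OF \<epsilon>(1)] by blast
  obtain \<delta>2 where \<delta>2: "\<delta>2 > 0" "\<forall>x. dist x c < \<delta>2 \<longrightarrow> dist (Yd x) (Yd c) < \<epsilon>"
    using cont \<epsilon>(1) unfolding continuous_at_eps_delta by blast
  have main: "\<bar>Y t - Y c - Yd c * (t - c)\<bar> \<le> \<epsilon> * \<bar>t - c\<bar>" if t: "\<bar>t - c\<bar> < min \<delta>1 \<delta>2" for t
  proof (cases "t \<in> K")
    case True then show ?thesis using \<delta>1 t by auto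
  next
    case False
    show ?thesis
    proof (cases "c < t")
      case True
      obtain a' \<xi> where a': "a' \<in> K" "c \<le> a'" "a' < t" "a' < \<xi>" "\<xi> < t" "Y t - Y a' = Yd \<xi> * (t - a')"
        using PR[OF False True] by blast
      have "\<bar>Yd \<xi> - Yd c\<bar> < \<epsilon>" using \<delta>2(2) a' t True by (auto simp: dist_real_def)
      then have 1: "\<bar>(Yd \<xi> - Yd c) * (t - a')\<bar> \<le> \<epsilon> * (t - a')" using a'
        by (simp add: abs_mult mult_right_mono)
      have 2: "\<bar>Y a' - Y c - Yd c * (a' - c)\<bar> \<le> \<epsilon> * (a' - c)" using \<delta>1 a' t by auto
      have "Y t - Y c - Yd c * (t - c) = (Yd \<xi> - Yd c) * (t - a') + (Y a' - Y c - Yd c * (a' - c))"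
        using a'(6) by (simp add: algebra_simps)
      then have "\<bar>Y t - Y c - Yd c * (t - c)\<bar> \<le> \<epsilon> * (t - a') + \<epsilon> * (a' - c)"
        using 1 2 by (smt (verit))
      also have "\<dots> = \<epsilon> * \<bar>t - c\<bar>" using True by (simp add: algebra_simps)
      finally show ?thesis .
    next
      case nt: False
      then have tc: "t < c" using False cK by (metis linorder_neqE_linordered_idom)
      obtain b' \<xi> where b': "b' \<in> K" "t < b'" "b' \<le> c" "t < \<xi>" "\<xi> < b'" "Y b' - Y t = Yd \<xi> * (b' - t)"
        using PL[OF False tc] by blast
      have "\<bar>Yd \<xi> - Yd c\<bar> < \<epsilon>" using \<delta>2(2) b' t tc by (auto simp: dist_real_def)
      then have 1: "\<bar>(Yd \<xi> - Yd c) * (b' - t)\<bar> \<le> \<epsilon> * (b' - t)" using b'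
        by (simp add: abs_mult mult_right_mono)
      have 2: "\<bar>Y b' - Y c - Yd c * (b' - c)\<bar> \<le> \<epsilon> * (c - b')" using \<delta>1 b' t tc by auto
      have "Y t - Y c - Yd c * (t - c) = - ((Yd \<xi> - Yd c) * (b' - t)) + (Y b' - Y c - Yd c * (b' - c))"
        using b'(6) by (simp add: algebra_simps)
      then have "\<bar>Y t - Y c - Yd c * (t - c)\<bar> \<le> \<epsilon> * (b' - t) + \<epsilon> * (c - b')"
        using 1 2 by (smt (verit))
      also have "\<dots> = \<epsilon> * \<bar>t - c\<bar>" using tc by (simp add: algebra_simps)
      finally show ?thesis .
    qed
  qed
  show "\<exists>s>0. \<forall>x. x \<noteq> c \<and> norm (x - c) < s \<longrightarrow> norm ((Y x - Y c) / (x - c) - Yd c) < r"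
  proof (intro exI[of _ "min \<delta>1 \<delta>2"] conjI allI impI)
    show "min \<delta>1 \<delta>2 > 0" using \<delta>1 \<delta>2 by simp
    fix x assume x: "x \<noteq> c \<and> norm (x - c) < min \<delta>1 \<delta>2"
    then have ne: "x - c \<noteq> 0" and pos: "\<bar>x - c\<bar> > 0" by auto
    have "(Y x - Y c) / (x - c) - Yd c = (Y x - Y c - Yd c * (x - c)) / (x - c)"
      using ne by (simp add: field_simps)
    then have "norm ((Y x - Y c) / (x - c) - Yd c) = \<bar>Y x - Y c - Yd c * (x - c)\<bar> / \<bar>x - c\<bar>"
      by (simp add: abs_div)
    also have "\<dots> \<le> \<epsilon> * \<bar>x - c\<bar> / \<bar>x - c\<bar>"
      using main[of x] x pos by (intro divide_right_mono) auto
    also have "\<dots> = \<epsilon>" using pos by simp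
    finally show "norm ((Y x - Y c) / (x - c) - Yd c) < r" using \<epsilon> by simp
  qed
qed

context whit begin

definition "RF c t = g1 c + q1 c * (t - c)"
definition "RG c t = g2 c + q2 c * (t - c)"
definition "RE c t = g3 c + 2 * g2 c * (RF c t - g1 c) - 2 * g1 c * (RG c t - g2 c)"

definition ff :: "real \<Rightarrow> real" where
  "ff t = (if t \<in> K then g1 t else if t < m then RF m t else if M < t then RF M t else PF (la t) (rb t) t)"
definition fd :: "real \<Rightarrow> real" where
  "fd t = (if t \<in> K then q1 t else if t < m then q1 m else if M < t then q1 M else fxd (la t) (rb t) (sg (la t) (rb t) t))"
definition gg :: "real \<Rightarrow> real" where
  "gg t = (if t \<in> K then g2 t else if t < m then RG m t else if M < t then RG M t else PG (la t) (rb t) t)"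
definition gd :: "real \<Rightarrow> real" where
  "gd t = (if t \<in> K then q2 t else if t < m then q2 m else if M < t then q2 M else fyd (la t) (rb t) (sg (la t) (rb t) t))"
definition ee :: "real \<Rightarrow> real" where
  "ee t = (if t \<in> K then g3 t else if t < m then RE m t else if M < t then RE M t else PE (la t) (rb t) t)"
definition ed :: "real \<Rightarrow> real" where
  "ed t = 2 * (fd t * gg t - ff t * gd t)"

lemma at_K: "t \<in> K \<Longrightarrow> ff t = g1 t \<and> fd t = q1 t \<and> gg t = g2 t \<and> gd t = q2 t \<and> ee t = g3 t"
  by (simp add: ff_def fd_def gg_def gd_def ee_def)

lemma at_left: "t < m \<Longrightarrow> ff t = RF m t \<and> fd t = q1 m \<and> gg t = RG m t \<and> gd t = q2 m \<and> ee t = RE m t \<and> t \<notin> K"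
  using mM(3) by (force simp: ff_def fd_def gg_def gd_def ee_def)

lemma at_right: "M < t \<Longrightarrow> ff t = RF M t \<and> fd t = q1 M \<and> gg t = RG M t \<and> gd t = q2 M \<and> ee t = RE M t \<and> t \<notin> K"
  using mM(4,5) by (force simp: ff_def fd_def gg_def gd_def ee_def)

lemma at_gap:
  assumes "gap a b" "a < t" "t < b"
  shows "ff t = PF a b t \<and> fd t = fxd a b (sg a b t) \<and> gg t = PG a b t \<and> gd t = fyd a b (sg a b t) \<and> ee t = PE a b t"
proof -
  have u: "la t = a" "rb t = b" "t \<notin> K" using gap_unique[OF assms] by auto
  have "m \<le> a" "b \<le> M" using gap_bounds[OF assms(1)] by auto
  then have "\<not> t < m" "\<not> M < t" using assms by auto
  then show ?thesis using u by (simp add: ff_def fd_def gg_def gd_def ee_def)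
qed

lemma RF_deriv: "(RF c has_real_derivative q1 c) (at t)"
  unfolding RF_def[abs_def] by (auto intro!: derivative_eq_intros)
lemma RG_deriv: "(RG c has_real_derivative q2 c) (at t)"
  unfolding RG_def[abs_def] by (auto intro!: derivative_eq_intros)
lemma RE_deriv: "(RE c has_real_derivative 2 * (q1 c * RG c t - RF c t * q2 c)) (at t)"
  unfolding RE_def[abs_def] RF_def RG_def by (auto intro!: derivative_eq_intros simp: algebra_simps)

lemma deriv_out:
  assumes "t \<notin> K"
  shows "(ff has_real_derivative fd t) (at t)" "(gg has_real_derivative gd t) (at t)"
    "(ee has_real_derivative ed t) (at t)" "isCont fd t" "isCont gd t"
proof -
  consider "t < m" | "M < t" | "m \<le> t \<and> t \<le> M" by linarith
  then have "(ff has_real_derivative fd t) (at t) \<and> (gg has_real_derivative gd t) (at t) \<and>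
    (ee has_real_derivative ed t) (at t) \<and> isCont fd t \<and> isCont gd t"
  proof cases
    case 1
    let ?S = "{..<m}"
    have S: "open ?S" "t \<in> ?S" using 1 by auto
    have e: "\<And>x. x \<in> ?S \<Longrightarrow> ff x = RF m x \<and> fd x = q1 m \<and> gg x = RG m x \<and> gd x = q2 m \<and> ee x = RE m x"
      using at_left by auto
    have "(ff has_real_derivative q1 m) (at t)"
      by (rule has_field_derivative_transform_within_open[OF RF_deriv S]) (use e in auto)
    moreover have "(gg has_real_derivative q2 m) (at t)"
      by (rule has_field_derivative_transform_within_open[OF RG_deriv S]) (use e in auto)
    moreover have "(ee has_real_derivative 2 * (q1 m * RG m t - RF m t * q2 m)) (at t)"
      by (rule has_field_derivative_transform_within_open[OF RE_deriv S]) (use e in auto)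
    moreover have "isCont fd t" by (rule isCont_local[OF S, of _ "\<lambda>_. q1 m"]) (use e in auto)
    moreover have "isCont gd t" by (rule isCont_local[OF S, of _ "\<lambda>_. q2 m"]) (use e in auto)
    ultimately show ?thesis using e[OF S(2)] by (simp add: ed_def)
  next
    case 2
    let ?S = "{M<..}"
    have S: "open ?S" "t \<in> ?S" using 2 by auto
    have e: "\<And>x. x \<in> ?S \<Longrightarrow> ff x = RF M x \<and> fd x = q1 M \<and> gg x = RG M x \<and> gd x = q2 M \<and> ee x = RE M x"
      using at_right by auto
    have "(ff has_real_derivative q1 M) (at t)"
      by (rule has_field_derivative_transform_within_open[OF RF_deriv S]) (use e in auto)
    moreover have "(gg has_real_derivative q2 M) (at t)"
      by (rule has_field_derivative_transform_within_open[OF RG_deriv S]) (use e in auto)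
    moreover have "(ee has_real_derivative 2 * (q1 M * RG M t - RF M t * q2 M)) (at t)"
      by (rule has_field_derivative_transform_within_open[OF RE_deriv S]) (use e in auto)
    moreover have "isCont fd t" by (rule isCont_local[OF S, of _ "\<lambda>_. q1 M"]) (use e in auto)
    moreover have "isCont gd t" by (rule isCont_local[OF S, of _ "\<lambda>_. q2 M"]) (use e in auto)
    ultimately show ?thesis using e[OF S(2)] by (simp add: ed_def)
  next
    case 3
    define a where "a = la t"
    define b where "b = rb t"
    have g: "gap a b" "a < t" "t < b" using gap_of[of t] 3 assms by (auto simp: a_def b_def)
    then have ab: "a < b" by simp
    let ?S = "{a<..<b}"
    have S: "open ?S" "t \<in> ?S" using g by auto
    have e: "\<And>x. x \<in> ?S \<Longrightarrow> ff x = PF a b x \<and> fd x = fxd a b (sg a b x) \<and> gg x = PG a b x \<and> gd x = fyd a b (sg a b x) \<and> ee x = PE a b x"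
      using at_gap[OF g(1)] by auto
    have "(ff has_real_derivative fxd a b (sg a b t)) (at t)"
      by (rule has_field_derivative_transform_within_open[OF PF_deriv[OF ab] S]) (use e in auto)
    moreover have "(gg has_real_derivative fyd a b (sg a b t)) (at t)"
      by (rule has_field_derivative_transform_within_open[OF PG_deriv[OF ab] S]) (use e in auto)
    moreover have "(ee has_real_derivative 2 * (fxd a b (sg a b t) * PG a b t - PF a b t * fyd a b (sg a b t))) (at t)"
      by (rule has_field_derivative_transform_within_open[OF PE_deriv[OF ab g(2,3)] S]) (use e in auto)
    moreover have "isCont fd t"
    proof (rule isCont_local[OF S, of _ "\<lambda>x. fxd a b (sg a b x)"])
      have c1: "isCont (sg a b) t" unfolding sg_def[abs_def] using ab by (intro continuous_intros) auto
      have c2: "isCont (fxd a b) (sg a b t)" unfolding fxd_def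
        using cont_hxd[of UNIV] by (simp add: continuous_on_eq_continuous_at)
      show "isCont (\<lambda>x. fxd a b (sg a b x)) t" by (rule isCont_o2[OF c1 c2])
    qed (use e in auto)
    moreover have "isCont gd t"
    proof (rule isCont_local[OF S, of _ "\<lambda>x. fyd a b (sg a b x)"])
      have c1: "isCont (sg a b) t" unfolding sg_def[abs_def] using ab by (intro continuous_intros) auto
      have c2: "isCont (fyd a b) (sg a b t)" unfolding fyd_def
        using cont_hyd[of UNIV] by (simp add: continuous_on_eq_continuous_at)
      show "isCont (\<lambda>x. fyd a b (sg a b x)) t" by (rule isCont_o2[OF c1 c2])
    qed (use e in auto)
    ultimately show ?thesis using e[OF S(2)] by (simp add: ed_def)
  qed
  then show "(ff has_real_derivative fd t) (at t)" "(gg has_real_derivative gd t) (at t)"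
    "(ee has_real_derivative ed t) (at t)" "isCont fd t" "isCont gd t" by auto
qed

end

lemma ex_pos_intro: "(d::real) > 0 \<Longrightarrow> (\<And>t. P d t \<Longrightarrow> Q t) \<Longrightarrow> \<exists>d>0. \<forall>t. P d t \<longrightarrow> Q t"
  by blast

context whit begin

definition "HCP \<epsilon> \<delta> \<longleftrightarrow> (\<forall>a b. a \<in> K \<longrightarrow> b \<in> K \<longrightarrow> 0 < \<bar>b - a\<bar> \<longrightarrow> \<bar>b - a\<bar> < \<delta> \<longrightarrow>
     \<bar>(g1 b - g1 a) / (b - a) - q1 a\<bar> < \<epsilon> \<and> \<bar>(g2 b - g2 a) / (b - a) - q2 a\<bar> < \<epsilon> \<and>
     \<bar>(g3 b - g3 a + 2 * (g1 a * g2 b - g2 a * g1 b)) / (b - a)^2\<bar> < \<epsilon> \<and>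
     \<bar>q1 a - q1 b\<bar> < 2 * \<epsilon> \<and> \<bar>q2 a - q2 b\<bar> < 2 * \<epsilon>)"

lemma hypc': assumes "\<epsilon> > 0" shows "\<exists>\<delta>>0. HCP \<epsilon> \<delta>"
proof (rule hypc[OF assms])
  fix \<delta> assume d: "\<delta> > 0" and H: "\<And>a b. a \<in> K \<Longrightarrow> b \<in> K \<Longrightarrow> 0 < \<bar>b - a\<bar> \<Longrightarrow> \<bar>b - a\<bar> < \<delta> \<Longrightarrow>
     \<bar>(g1 b - g1 a) / (b - a) - q1 a\<bar> < \<epsilon> \<and> \<bar>(g2 b - g2 a) / (b - a) - q2 a\<bar> < \<epsilon> \<and>
     \<bar>(g3 b - g3 a + 2 * (g1 a * g2 b - g2 a * g1 b)) / (b - a)^2\<bar> < \<epsilon> \<and>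
     \<bar>q1 a - q1 b\<bar> < 2 * \<epsilon> \<and> \<bar>q2 a - q2 b\<bar> < 2 * \<epsilon>"
  have "HCP \<epsilon> \<delta>" unfolding HCP_def by (intro allI impI) (rule H; assumption)
  with d show "\<exists>\<delta>>0. HCP \<epsilon> \<delta>" by blast
qed

lemma HCP_D:
  assumes "HCP \<epsilon> \<delta>" "a \<in> K" "b \<in> K" "0 < \<bar>b - a\<bar>" "\<bar>b - a\<bar> < \<delta>"
  shows "\<bar>(g1 b - g1 a) / (b - a) - q1 a\<bar> < \<epsilon> \<and> \<bar>(g2 b - g2 a) / (b - a) - q2 a\<bar> < \<epsilon> \<and>
     \<bar>(g3 b - g3 a + 2 * (g1 a * g2 b - g2 a * g1 b)) / (b - a)^2\<bar> < \<epsilon> \<and>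
     \<bar>q1 a - q1 b\<bar> < 2 * \<epsilon> \<and> \<bar>q2 a - q2 b\<bar> < 2 * \<epsilon>"
  using assms(1)[unfolded HCP_def, rule_format, OF assms(2-5)] .

definition "NSP c \<eta> \<epsilon> \<longleftrightarrow> (\<forall>X1 u1 v1 X2 u2 v2 Z c1 c2 s. \<bar>X1 - q1 c\<bar> \<le> \<eta> \<longrightarrow> \<bar>u1 - q1 c\<bar> \<le> \<eta> \<longrightarrow> \<bar>v1 - q1 c\<bar> \<le> \<eta> \<longrightarrow>
      \<bar>X2 - q2 c\<bar> \<le> \<eta> \<longrightarrow> \<bar>u2 - q2 c\<bar> \<le> \<eta> \<longrightarrow> \<bar>v2 - q2 c\<bar> \<le> \<eta> \<longrightarrow> \<bar>Z\<bar> \<le> \<eta> \<longrightarrow>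
      \<bar>c1\<bar> \<le> sqrt (315 * \<bar>Z - area X1 u1 v1 0 X2 u2 v2 0\<bar>) \<longrightarrow>
      \<bar>c2\<bar> \<le> sqrt (315 * \<bar>Z - area X1 u1 v1 0 X2 u2 v2 0\<bar>) \<longrightarrow> 0 \<le> s \<longrightarrow> s \<le> 1 \<longrightarrow>
      \<bar>hxd X1 u1 v1 c1 s - q1 c\<bar> \<le> \<epsilon> \<and> \<bar>hyd X2 u2 v2 c2 s - q2 c\<bar> \<le> \<epsilon>)"

lemma NS_at:
  assumes "\<epsilon> > 0"
  shows "\<exists>\<eta>>0. \<eta> \<le> \<epsilon> \<and> NSP c \<eta> \<epsilon>"
proof (rule NS[OF assms, of "q1 c" "q2 c"])
  fix \<eta> assume h: "\<eta> > 0" "\<eta> \<le> \<epsilon>" "\<And>X1 u1 v1 X2 u2 v2 Z c1 c2 s. \<bar>X1 - q1 c\<bar> \<le> \<eta> \<Longrightarrow> \<bar>u1 - q1 c\<bar> \<le> \<eta> \<Longrightarrow> \<bar>v1 - q1 c\<bar> \<le> \<eta> \<Longrightarrow>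
      \<bar>X2 - q2 c\<bar> \<le> \<eta> \<Longrightarrow> \<bar>u2 - q2 c\<bar> \<le> \<eta> \<Longrightarrow> \<bar>v2 - q2 c\<bar> \<le> \<eta> \<Longrightarrow> \<bar>Z\<bar> \<le> \<eta> \<Longrightarrow>
      \<bar>c1\<bar> \<le> sqrt (315 * \<bar>Z - area X1 u1 v1 0 X2 u2 v2 0\<bar>) \<Longrightarrow>
      \<bar>c2\<bar> \<le> sqrt (315 * \<bar>Z - area X1 u1 v1 0 X2 u2 v2 0\<bar>) \<Longrightarrow> 0 \<le> s \<Longrightarrow> s \<le> 1 \<Longrightarrow>
      \<bar>hxd X1 u1 v1 c1 s - q1 c\<bar> \<le> \<epsilon> \<and> \<bar>hyd X2 u2 v2 c2 s - q2 c\<bar> \<le> \<epsilon>"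
  have "NSP c \<eta> \<epsilon>" unfolding NSP_def by (intro allI impI) (rule h(3); assumption)
  with h(1,2) show ?thesis by blast
qed

lemma gap_close:
  assumes NSe: "NSP c \<eta> \<epsilon>"
    and HC: "HCP (\<eta> / 3) \<delta>h"
    and \<eta>: "\<eta> > 0"
    and g: "gap a' b'" and c: "c \<in> K" and close: "\<bar>a' - c\<bar> < \<delta>h" "\<bar>b' - c\<bar> < \<delta>h" "b' - a' < \<delta>h"
    and s: "0 \<le> s" "s \<le> 1"
  shows "\<bar>fxd a' b' s - q1 c\<bar> \<le> \<epsilon> \<and> \<bar>fyd a' b' s - q2 c\<bar> \<le> \<epsilon>"
proof -
  have gK: "a' \<in> K" "b' \<in> K" "a' < b'" using g unfolding gap_def by auto
  have cl: "\<bar>q1 x - q1 c\<bar> \<le> 2 * (\<eta> / 3) \<and> \<bar>q2 x - q2 c\<bar> \<le> 2 * (\<eta> / 3)" if "x \<in> K" "\<bar>x - c\<bar> < \<delta>h" for x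
  proof (cases "x = c")
    case True then show ?thesis using \<eta> by simp
  next
    case False
    then have "0 < \<bar>x - c\<bar>" by simp
    from HCP_D[OF HC c that(1) this that(2)] show ?thesis by (simp add: abs_minus_commute)
  qed
  have d: "\<bar>(g1 b' - g1 a') / (b' - a') - q1 a'\<bar> < \<eta> / 3 \<and> \<bar>(g2 b' - g2 a') / (b' - a') - q2 a'\<bar> < \<eta> / 3 \<and>
     \<bar>(g3 b' - g3 a' + 2 * (g1 a' * g2 b' - g2 a' * g1 b')) / (b' - a')^2\<bar> < \<eta> / 3"
    using HCP_D[OF HC gK(1,2)] gK close by auto
  have ca: "\<bar>q1 a' - q1 c\<bar> \<le> 2 * (\<eta> / 3)" "\<bar>q2 a' - q2 c\<bar> \<le> 2 * (\<eta> / 3)" using cl[OF gK(1) close(1)] by auto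
  have cb: "\<bar>q1 b' - q1 c\<bar> \<le> 2 * (\<eta> / 3)" "\<bar>q2 b' - q2 c\<bar> \<le> 2 * (\<eta> / 3)" using cl[OF gK(2) close(2)] by auto
  have X1: "\<bar>DX1 a' b' - q1 c\<bar> \<le> \<eta>" using d ca unfolding DX1_def by linarith
  have X2: "\<bar>DX2 a' b' - q2 c\<bar> \<le> \<eta>" using d ca unfolding DX2_def by linarith
  have Z: "\<bar>DZ a' b'\<bar> \<le> \<eta>" using d \<eta> unfolding DZ_def by linarith
  show ?thesis unfolding fxd_def fyd_def
    by (rule NSe[unfolded NSP_def, rule_format, OF X1 _ _ X2 _ _ Z _ _ s]) (use ca cb \<eta> corr_prop(2,3)[of a' b'] in \<open>auto simp: A00_def\<close>)
qed

lemma fd_right: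
  assumes c: "c \<in> K" and \<epsilon>: "\<epsilon> > 0"
  shows "\<exists>\<delta>>0. \<forall>t. c < t \<and> t < c + \<delta> \<longrightarrow> \<bar>fd t - q1 c\<bar> \<le> \<epsilon> \<and> \<bar>gd t - q2 c\<bar> \<le> \<epsilon>"
proof (cases "c < M")
  case False
  then have cM: "c = M" using mM(4)[OF c] by simp
  show ?thesis
  proof (rule ex_pos_intro[of 1])
    fix t assume "c < t \<and> t < c + 1"
    then show "\<bar>fd t - q1 c\<bar> \<le> \<epsilon> \<and> \<bar>gd t - q2 c\<bar> \<le> \<epsilon>" using at_right[of t] cM \<epsilon> by auto
  qed simp
next
  case cM: True
  have mc: "m \<le> c" using mM(3)[OF c] .
  show ?thesis
  proof (cases "\<forall>\<delta>>0. \<exists>k\<in>K. c < k \<and> k < c + \<delta>")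
    case True
    obtain \<eta> where \<eta>: "\<eta> > 0" "\<eta> \<le> \<epsilon>" and NSe: "NSP c \<eta> \<epsilon>"
      using NS_at[OF \<epsilon>] by blast
    have e3: "\<eta> / 3 > 0" using \<eta> by simp
    obtain \<delta>h where \<delta>h: "\<delta>h > 0" and HC: "HCP (\<eta> / 3) \<delta>h"
      using hypc'[OF e3] by auto
    obtain k where k: "k \<in> K" "c < k" "k < c + \<delta>h" using True \<delta>h by blast
    show ?thesis
    proof (rule ex_pos_intro[of "k - c"])
      show "k - c > 0" using k by simp
      fix t assume t: "c < t \<and> t < c + (k - c)"
      show "\<bar>fd t - q1 c\<bar> \<le> \<epsilon> \<and> \<bar>gd t - q2 c\<bar> \<le> \<epsilon>"
      proof (cases "t \<in> K")
        case True
        have "\<bar>q1 c - q1 t\<bar> < 2 * (\<eta> / 3) \<and> \<bar>q2 c - q2 t\<bar> < 2 * (\<eta> / 3)"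
          using HCP_D[OF HC c True] t k by auto
        then show ?thesis using at_K[OF True] \<eta> by (auto simp: abs_minus_commute)
      next
        case False
        have tM: "m \<le> t" "t \<le> M" using t mc k mM(4) by force+
        define a' where "a' = la t"
        define b' where "b' = rb t"
        have g: "gap a' b'" "a' < t" "t < b'" using gap_of[OF tM False] by (auto simp: a'_def b'_def)
        have ca: "c \<le> a'" unfolding a'_def using la_props(3)[OF tM(1) c] t by simp
        have bk: "b' \<le> k" unfolding b'_def using rb_props(3)[OF tM(2) k(1)] t by simp
        have s: "0 \<le> sg a' b' t" "sg a' b' t \<le> 1" using sg_range[of a' b' t] g by auto
        have "\<bar>fxd a' b' (sg a' b' t) - q1 c\<bar> \<le> \<epsilon> \<and> \<bar>fyd a' b' (sg a' b' t) - q2 c\<bar> \<le> \<epsilon>"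
          by (rule gap_close[where c=c and \<eta>=\<eta> and \<epsilon>=\<epsilon> and \<delta>h=\<delta>h and a'=a' and b'=b' and s="sg a' b' t"])
             (use NSe HC \<eta> g c s ca bk k in auto)
        then show ?thesis using at_gap[OF g] by simp
      qed
    qed
  next
    case False
    then obtain \<delta>0 where \<delta>0: "\<delta>0 > 0" "\<And>k. k \<in> K \<Longrightarrow> \<not> (c < k \<and> k < c + \<delta>0)" by force
    define \<mu> where "\<mu> = min \<delta>0 (M - c)"
    have mn: "\<mu> \<le> M - c" "\<mu> \<le> \<delta>0" "\<mu> > 0" using \<delta>0 cM by (auto simp: \<mu>_def)
    define t0 where "t0 = c + \<mu> / 2"
    have t0: "c < t0" "t0 < c + \<delta>0" "t0 < M" using mn by (auto simp: t0_def)
    have t0K: "t0 \<notin> K" using \<delta>0(2) t0 by auto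
    have tM: "m \<le> t0" "t0 \<le> M" using t0 mc by auto
    define b0 where "b0 = rb t0"
    have g0: "gap (la t0) b0" "la t0 < t0" "t0 < b0" using gap_of[OF tM t0K] by (auto simp: b0_def)
    have "c \<le> la t0" using la_props(3)[OF tM(1) c] t0 by simp
    moreover have "\<not> c < la t0" using \<delta>0(2)[OF la_props(1)[OF tM(1)]] g0 t0 by auto
    ultimately have la: "la t0 = c" by simp
    have g: "gap c b0" "c < b0" using g0 la t0 by auto
    have c1: "isCont (sg c b0) c" unfolding sg_def[abs_def] using g by (intro continuous_intros) auto
    have cf: "isCont (\<lambda>x. fxd c b0 (sg c b0 x)) c"
      by (rule isCont_o2[OF c1]) (use cont_hxd[of UNIV] in \<open>simp add: fxd_def continuous_on_eq_continuous_at\<close>)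
    have cg: "isCont (\<lambda>x. fyd c b0 (sg c b0 x)) c"
      by (rule isCont_o2[OF c1]) (use cont_hyd[of UNIV] in \<open>simp add: fyd_def continuous_on_eq_continuous_at\<close>)
    have v: "fxd c b0 (sg c b0 c) = q1 c" "fyd c b0 (sg c b0 c) = q2 c"
      by (simp_all add: sg_def fxd_def fyd_def hx_vals hy_vals)
    obtain d1 where d1: "d1 > 0" "\<forall>x. dist x c < d1 \<longrightarrow> dist (fxd c b0 (sg c b0 x)) (q1 c) < \<epsilon>"
      using cf \<epsilon> v unfolding continuous_at_eps_delta by metis
    obtain d2 where d2: "d2 > 0" "\<forall>x. dist x c < d2 \<longrightarrow> dist (fyd c b0 (sg c b0 x)) (q2 c) < \<epsilon>"
      using cg \<epsilon> v unfolding continuous_at_eps_delta by metis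
    show ?thesis
    proof (rule ex_pos_intro[of "min (min d1 d2) (b0 - c)"])
      show "min (min d1 d2) (b0 - c) > 0" using d1 d2 g by simp
      fix t assume t: "c < t \<and> t < c + min (min d1 d2) (b0 - c)"
      then have e: "fd t = fxd c b0 (sg c b0 t)" "gd t = fyd c b0 (sg c b0 t)" using at_gap[OF g(1)] by auto
      have "dist t c < d1" "dist t c < d2" using t by (auto simp: dist_real_def)
      then show "\<bar>fd t - q1 c\<bar> \<le> \<epsilon> \<and> \<bar>gd t - q2 c\<bar> \<le> \<epsilon>" using d1 d2 e by (auto simp: dist_real_def)
    qed
  qed
qed

lemma fd_left:
  assumes c: "c \<in> K" and \<epsilon>: "\<epsilon> > 0"
  shows "\<exists>\<delta>>0. \<forall>t. c - \<delta> < t \<and> t < c \<longrightarrow> \<bar>fd t - q1 c\<bar> \<le> \<epsilon> \<and> \<bar>gd t - q2 c\<bar> \<le> \<epsilon>"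
proof (cases "m < c")
  case False
  then have cm: "c = m" using mM(3)[OF c] by simp
  show ?thesis
  proof (rule ex_pos_intro[of 1])
    fix t assume "c - 1 < t \<and> t < c"
    then show "\<bar>fd t - q1 c\<bar> \<le> \<epsilon> \<and> \<bar>gd t - q2 c\<bar> \<le> \<epsilon>" using at_left[of t] cm \<epsilon> by auto
  qed simp
next
  case cm: True
  have Mc: "c \<le> M" using mM(4)[OF c] .
  show ?thesis
  proof (cases "\<forall>\<delta>>0. \<exists>k\<in>K. c - \<delta> < k \<and> k < c")
    case True
    obtain \<eta> where \<eta>: "\<eta> > 0" "\<eta> \<le> \<epsilon>" and NSe: "NSP c \<eta> \<epsilon>"
      using NS_at[OF \<epsilon>] by blast
    have e3: "\<eta> / 3 > 0" using \<eta> by simp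
    obtain \<delta>h where \<delta>h: "\<delta>h > 0" and HC: "HCP (\<eta> / 3) \<delta>h"
      using hypc'[OF e3] by auto
    obtain k where k: "k \<in> K" "c - \<delta>h < k" "k < c" using True \<delta>h by blast
    show ?thesis
    proof (rule ex_pos_intro[of "c - k"])
      show "c - k > 0" using k by simp
      fix t assume t: "c - (c - k) < t \<and> t < c"
      show "\<bar>fd t - q1 c\<bar> \<le> \<epsilon> \<and> \<bar>gd t - q2 c\<bar> \<le> \<epsilon>"
      proof (cases "t \<in> K")
        case True
        have "\<bar>q1 c - q1 t\<bar> < 2 * (\<eta> / 3) \<and> \<bar>q2 c - q2 t\<bar> < 2 * (\<eta> / 3)"
          using HCP_D[OF HC c True] t k by auto
        then show ?thesis using at_K[OF True] \<eta> by (auto simp: abs_minus_commute)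
      next
        case False
        have tM: "m \<le> t" "t \<le> M" using t Mc k mM(3) by force+
        define a' where "a' = la t"
        define b' where "b' = rb t"
        have g: "gap a' b'" "a' < t" "t < b'" using gap_of[OF tM False] by (auto simp: a'_def b'_def)
        have ka: "k \<le> a'" unfolding a'_def using la_props(3)[OF tM(1) k(1)] t by simp
        have bc: "b' \<le> c" unfolding b'_def using rb_props(3)[OF tM(2) c] t by simp
        have s: "0 \<le> sg a' b' t" "sg a' b' t \<le> 1" using sg_range[of a' b' t] g by auto
        have "\<bar>fxd a' b' (sg a' b' t) - q1 c\<bar> \<le> \<epsilon> \<and> \<bar>fyd a' b' (sg a' b' t) - q2 c\<bar> \<le> \<epsilon>"
          by (rule gap_close[where c=c and \<eta>=\<eta> and \<epsilon>=\<epsilon> and \<delta>h=\<delta>h and a'=a' and b'=b' and s="sg a' b' t"])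
             (use NSe HC \<eta> g c s ka bc k in auto)
        then show ?thesis using at_gap[OF g] by simp
      qed
    qed
  next
    case False
    then obtain \<delta>0 where \<delta>0: "\<delta>0 > 0" "\<And>k. k \<in> K \<Longrightarrow> \<not> (c - \<delta>0 < k \<and> k < c)" by force
    define \<mu> where "\<mu> = min \<delta>0 (c - m)"
    have mn: "\<mu> \<le> c - m" "\<mu> \<le> \<delta>0" "\<mu> > 0" using \<delta>0 cm by (auto simp: \<mu>_def)
    define t0 where "t0 = c - \<mu> / 2"
    have t0: "t0 < c" "c - \<delta>0 < t0" "m < t0" using mn by (auto simp: t0_def)
    have t0K: "t0 \<notin> K" using \<delta>0(2) t0 by auto
    have tM: "m \<le> t0" "t0 \<le> M" using t0 Mc by auto
    define a0 where "a0 = la t0"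
    have g0: "gap a0 (rb t0)" "a0 < t0" "t0 < rb t0" using gap_of[OF tM t0K] by (auto simp: a0_def)
    have "rb t0 \<le> c" using rb_props(3)[OF tM(2) c] t0 by simp
    moreover have "\<not> rb t0 < c" using \<delta>0(2)[OF rb_props(1)[OF tM(2)]] g0 t0 by auto
    ultimately have rb: "rb t0 = c" by simp
    have g: "gap a0 c" "a0 < c" using g0 rb t0 by auto
    have c1: "isCont (sg a0 c) c" unfolding sg_def[abs_def] using g by (intro continuous_intros) auto
    have cf: "isCont (\<lambda>x. fxd a0 c (sg a0 c x)) c"
      by (rule isCont_o2[OF c1]) (use cont_hxd[of UNIV] in \<open>simp add: fxd_def continuous_on_eq_continuous_at\<close>)
    have cg: "isCont (\<lambda>x. fyd a0 c (sg a0 c x)) c"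
      by (rule isCont_o2[OF c1]) (use cont_hyd[of UNIV] in \<open>simp add: fyd_def continuous_on_eq_continuous_at\<close>)
    have s1: "sg a0 c c = 1" using g by (simp add: sg_def)
    have v: "fxd a0 c (sg a0 c c) = q1 c" "fyd a0 c (sg a0 c c) = q2 c"
      unfolding s1 by (simp_all add: fxd_def fyd_def hx_vals hy_vals)
    obtain d1 where d1: "d1 > 0" "\<forall>x. dist x c < d1 \<longrightarrow> dist (fxd a0 c (sg a0 c x)) (q1 c) < \<epsilon>"
      using cf \<epsilon> v unfolding continuous_at_eps_delta by metis
    obtain d2 where d2: "d2 > 0" "\<forall>x. dist x c < d2 \<longrightarrow> dist (fyd a0 c (sg a0 c x)) (q2 c) < \<epsilon>"
      using cg \<epsilon> v unfolding continuous_at_eps_delta by metis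
    show ?thesis
    proof (rule ex_pos_intro[of "min (min d1 d2) (c - a0)"])
      show "min (min d1 d2) (c - a0) > 0" using d1 d2 g by simp
      fix t assume t: "c - min (min d1 d2) (c - a0) < t \<and> t < c"
      then have e: "fd t = fxd a0 c (sg a0 c t)" "gd t = fyd a0 c (sg a0 c t)" using at_gap[OF g(1)] by auto
      have "dist t c < d1" "dist t c < d2" using t by (auto simp: dist_real_def)
      then show "\<bar>fd t - q1 c\<bar> \<le> \<epsilon> \<and> \<bar>gd t - q2 c\<bar> \<le> \<epsilon>" using d1 d2 e by (auto simp: dist_real_def)
    qed
  qed
qed

lemma cont_at_K:
  assumes c: "c \<in> K"
  shows "isCont fd c" "isCont gd c"
proof -
  have main: "\<exists>d>0. \<forall>t. dist t c < d \<longrightarrow> dist (fd t) (fd c) < e \<and> dist (gd t) (gd c) < e" if e: "e > 0" for e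
  proof -
    have e2: "e / 2 > 0" using e by simp
    obtain dR where dR: "dR > 0" "\<forall>t. c < t \<and> t < c + dR \<longrightarrow> \<bar>fd t - q1 c\<bar> \<le> e / 2 \<and> \<bar>gd t - q2 c\<bar> \<le> e / 2"
      using fd_right[OF c e2] by blast
    obtain dL where dL: "dL > 0" "\<forall>t. c - dL < t \<and> t < c \<longrightarrow> \<bar>fd t - q1 c\<bar> \<le> e / 2 \<and> \<bar>gd t - q2 c\<bar> \<le> e / 2"
      using fd_left[OF c e2] by blast
    show ?thesis
    proof (rule ex_pos_intro[of "min dR dL"])
      show "min dR dL > 0" using dR dL by simp
      fix t assume t: "dist t c < min dR dL"
      have fc: "fd c = q1 c" "gd c = q2 c" using at_K[OF c] by auto
      consider "t = c" | "c < t" | "t < c" by linarith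
      then have "\<bar>fd t - q1 c\<bar> \<le> e / 2 \<and> \<bar>gd t - q2 c\<bar> \<le> e / 2"
      proof cases
        case 1 then show ?thesis using fc e by simp
      next
        case 2 then show ?thesis using dR t by (auto simp: dist_real_def)
      next
        case 3 then show ?thesis using dL t by (auto simp: dist_real_def)
      qed
      then show "dist (fd t) (fd c) < e \<and> dist (gd t) (gd c) < e" using fc e by (auto simp: dist_real_def)
    qed
  qed
  show "isCont fd c" unfolding continuous_at_eps_delta using main by blast
  show "isCont gd c" unfolding continuous_at_eps_delta using main by blast
qed

lemma cont_fd: "isCont fd t" "isCont gd t"
  using cont_at_K deriv_out by (cases "t \<in> K"; auto)+

end

lemma mvt_piece:
  fixes P D :: "real \<Rightarrow> real"
  assumes "a < t" "continuous_on {a..t} P" "\<And>x. a < x \<Longrightarrow> x < t \<Longrightarrow> (P has_real_derivative D x) (at x)"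
  shows "\<exists>\<xi>. a < \<xi> \<and> \<xi> < t \<and> P t - P a = D \<xi> * (t - a)"
proof -
  have "\<And>x. a < x \<Longrightarrow> x < t \<Longrightarrow> P differentiable at x"
    using assms(3) real_differentiable_def by blast
  from MVT[OF assms(1,2) this] obtain l z where z: "a < z" "z < t" "(P has_real_derivative l) (at z)"
    "P t - P a = (t - a) * l" by blast
  have "l = D z" using DERIV_unique[OF z(3) assms(3)[OF z(1,2)]] .
  then show ?thesis using z by (intro exI[of _ z]) (simp add: algebra_simps)
qed

context whit begin

lemma cont_RE: "continuous_on S (RE c)" "continuous_on S (RF c)" "continuous_on S (RG c)"
  unfolding RE_def[abs_def] RF_def[abs_def] RG_def[abs_def] by (intro continuous_intros)+

lemma cont_PF: "a < b \<Longrightarrow> continuous_on S (PF a b)" "a < b \<Longrightarrow> continuous_on S (PG a b)"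
  using PF_deriv PG_deriv by (meson DERIV_continuous continuous_at_imp_continuous_on)+

lemma R_at: "RF c c = g1 c" "RG c c = g2 c" "RE c c = g3 c"
  by (simp_all add: RF_def RG_def RE_def)

lemma PR_all:
  assumes tK: "t \<notin> K" and c: "c \<in> K" and ct: "c < t"
  shows "\<exists>a'\<in>K. c \<le> a' \<and> a' < t \<and> (\<exists>\<xi>. a' < \<xi> \<and> \<xi> < t \<and> ff t - ff a' = fd \<xi> * (t - a'))
     \<and> (\<exists>\<xi>. a' < \<xi> \<and> \<xi> < t \<and> gg t - gg a' = gd \<xi> * (t - a'))
     \<and> (\<exists>\<xi>. a' < \<xi> \<and> \<xi> < t \<and> ee t - ee a' = ed \<xi> * (t - a'))"
proof (cases "M < t")
  case True
  have cM: "c \<le> M" using mM(4)[OF c] .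
  have e: "\<And>x. M < x \<Longrightarrow> ff x = RF M x \<and> fd x = q1 M \<and> gg x = RG M x \<and> gd x = q2 M \<and> ee x = RE M x"
    using at_right by blast
  have eM: "ff M = RF M M" "gg M = RG M M" "ee M = RE M M" using at_K[OF mM(2)] R_at by auto
  have 1: "\<exists>\<xi>. M < \<xi> \<and> \<xi> < t \<and> ff t - ff M = fd \<xi> * (t - M)"
  proof -
    obtain \<xi> where "M < \<xi>" "\<xi> < t" "RF M t - RF M M = q1 M * (t - M)"
      using mvt_piece[OF True cont_RE(2) RF_deriv] by blast
    then show ?thesis using e[OF True] eM e[of \<xi>] by auto
  qed
  have 2: "\<exists>\<xi>. M < \<xi> \<and> \<xi> < t \<and> gg t - gg M = gd \<xi> * (t - M)"
  proof -
    obtain \<xi> where "M < \<xi>" "\<xi> < t" "RG M t - RG M M = q2 M * (t - M)"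
      using mvt_piece[OF True cont_RE(3) RG_deriv] by blast
    then show ?thesis using e[OF True] eM e[of \<xi>] by auto
  qed
  have 3: "\<exists>\<xi>. M < \<xi> \<and> \<xi> < t \<and> ee t - ee M = ed \<xi> * (t - M)"
  proof -
    obtain \<xi> where x: "M < \<xi>" "\<xi> < t" "RE M t - RE M M = 2 * (q1 M * RG M \<xi> - RF M \<xi> * q2 M) * (t - M)"
      using mvt_piece[OF True cont_RE(1), where D="\<lambda>x. 2 * (q1 M * RG M x - RF M x * q2 M)"] RE_deriv by blast
    have "ed \<xi> = 2 * (q1 M * RG M \<xi> - RF M \<xi> * q2 M)" using e[OF x(1)] by (simp add: ed_def)
    then show ?thesis using e[OF True] eM x by auto
  qed
  show ?thesis using 1 2 3 mM(2) cM True by blast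
next
  case False
  have tM: "m \<le> t" "t \<le> M" using False mM(3)[OF c] ct by auto
  define a' where "a' = la t"
  define b' where "b' = rb t"
  have g: "gap a' b'" "a' < t" "t < b'" using gap_of[OF tM tK] by (auto simp: a'_def b'_def)
  have ab: "a' < b'" using g by simp
  have aK: "a' \<in> K" using g unfolding gap_def by auto
  have ca: "c \<le> a'" unfolding a'_def using la_props(3)[OF tM(1) c] ct by simp
  have e: "\<And>x. a' < x \<Longrightarrow> x < b' \<Longrightarrow> ff x = PF a' b' x \<and> fd x = fxd a' b' (sg a' b' x) \<and> gg x = PG a' b' x \<and> gd x = fyd a' b' (sg a' b' x) \<and> ee x = PE a' b' x"
    using at_gap[OF g(1)] by blast
  have ea: "ff a' = PF a' b' a'" "gg a' = PG a' b' a'" "ee a' = PE a' b' a'"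
    using at_K[OF aK] P_ends[OF ab] by auto
  have 1: "\<exists>\<xi>. a' < \<xi> \<and> \<xi> < t \<and> ff t - ff a' = fd \<xi> * (t - a')"
  proof -
    obtain \<xi> where x: "a' < \<xi>" "\<xi> < t" "PF a' b' t - PF a' b' a' = fxd a' b' (sg a' b' \<xi>) * (t - a')"
      using mvt_piece[OF g(2) cont_PF(1)[OF ab], where D="\<lambda>x. fxd a' b' (sg a' b' x)"] PF_deriv[OF ab] by blast
    then show ?thesis using e[OF g(2,3)] ea e[of \<xi>] g by (intro exI[of _ \<xi>]) auto
  qed
  have 2: "\<exists>\<xi>. a' < \<xi> \<and> \<xi> < t \<and> gg t - gg a' = gd \<xi> * (t - a')"
  proof -
    obtain \<xi> where x: "a' < \<xi>" "\<xi> < t" "PG a' b' t - PG a' b' a' = fyd a' b' (sg a' b' \<xi>) * (t - a')"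
      using mvt_piece[OF g(2) cont_PF(2)[OF ab], where D="\<lambda>x. fyd a' b' (sg a' b' x)"] PG_deriv[OF ab] by blast
    then show ?thesis using e[OF g(2,3)] ea e[of \<xi>] g by (intro exI[of _ \<xi>]) auto
  qed
  have 3: "\<exists>\<xi>. a' < \<xi> \<and> \<xi> < t \<and> ee t - ee a' = ed \<xi> * (t - a')"
  proof -
    have cP: "continuous_on {a'..t} (PE a' b')"
      by (rule continuous_on_subset[OF PE_cont[OF ab]]) (use g in auto)
    obtain \<xi> where x: "a' < \<xi>" "\<xi> < t" "PE a' b' t - PE a' b' a' =
        2 * (fxd a' b' (sg a' b' \<xi>) * PG a' b' \<xi> - PF a' b' \<xi> * fyd a' b' (sg a' b' \<xi>)) * (t - a')"
      using mvt_piece[OF g(2) cP, where D="\<lambda>x. 2 * (fxd a' b' (sg a' b' x) * PG a' b' x - PF a' b' x * fyd a' b' (sg a' b' x))"]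
        PE_deriv[OF ab] g by fastforce
    have "ed \<xi> = 2 * (fxd a' b' (sg a' b' \<xi>) * PG a' b' \<xi> - PF a' b' \<xi> * fyd a' b' (sg a' b' \<xi>))"
      using e[of \<xi>] x g by (simp add: ed_def)
    then show ?thesis using e[OF g(2,3)] ea x by (intro exI[of _ \<xi>]) auto
  qed
  show ?thesis using 1 2 3 aK ca g by blast
qed

lemma PL_all:
  assumes tK: "t \<notin> K" and c: "c \<in> K" and ct: "t < c"
  shows "\<exists>b'\<in>K. t < b' \<and> b' \<le> c \<and> (\<exists>\<xi>. t < \<xi> \<and> \<xi> < b' \<and> ff b' - ff t = fd \<xi> * (b' - t))
     \<and> (\<exists>\<xi>. t < \<xi> \<and> \<xi> < b' \<and> gg b' - gg t = gd \<xi> * (b' - t))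
     \<and> (\<exists>\<xi>. t < \<xi> \<and> \<xi> < b' \<and> ee b' - ee t = ed \<xi> * (b' - t))"
proof (cases "t < m")
  case True
  have cm: "m \<le> c" using mM(3)[OF c] .
  have e: "\<And>x. x < m \<Longrightarrow> ff x = RF m x \<and> fd x = q1 m \<and> gg x = RG m x \<and> gd x = q2 m \<and> ee x = RE m x"
    using at_left by blast
  have em: "ff m = RF m m" "gg m = RG m m" "ee m = RE m m" using at_K[OF mM(1)] R_at by auto
  have 1: "\<exists>\<xi>. t < \<xi> \<and> \<xi> < m \<and> ff m - ff t = fd \<xi> * (m - t)"
  proof -
    obtain \<xi> where "t < \<xi>" "\<xi> < m" "RF m m - RF m t = q1 m * (m - t)"
      using mvt_piece[OF True cont_RE(2) RF_deriv] by blast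
    then show ?thesis using e[OF True] em e[of \<xi>] by auto
  qed
  have 2: "\<exists>\<xi>. t < \<xi> \<and> \<xi> < m \<and> gg m - gg t = gd \<xi> * (m - t)"
  proof -
    obtain \<xi> where "t < \<xi>" "\<xi> < m" "RG m m - RG m t = q2 m * (m - t)"
      using mvt_piece[OF True cont_RE(3) RG_deriv] by blast
    then show ?thesis using e[OF True] em e[of \<xi>] by auto
  qed
  have 3: "\<exists>\<xi>. t < \<xi> \<and> \<xi> < m \<and> ee m - ee t = ed \<xi> * (m - t)"
  proof -
    obtain \<xi> where x: "t < \<xi>" "\<xi> < m" "RE m m - RE m t = 2 * (q1 m * RG m \<xi> - RF m \<xi> * q2 m) * (m - t)"
      using mvt_piece[OF True cont_RE(1), where D="\<lambda>x. 2 * (q1 m * RG m x - RF m x * q2 m)"] RE_deriv by blast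
    have "ed \<xi> = 2 * (q1 m * RG m \<xi> - RF m \<xi> * q2 m)" using e[OF x(2)] by (simp add: ed_def)
    then show ?thesis using e[OF True] em x by auto
  qed
  show ?thesis using 1 2 3 mM(1) cm True by blast
next
  case False
  have tM: "m \<le> t" "t \<le> M" using False mM(4)[OF c] ct by auto
  define a' where "a' = la t"
  define b' where "b' = rb t"
  have g: "gap a' b'" "a' < t" "t < b'" using gap_of[OF tM tK] by (auto simp: a'_def b'_def)
  have ab: "a' < b'" using g by simp
  have bK: "b' \<in> K" using g unfolding gap_def by auto
  have bc: "b' \<le> c" unfolding b'_def using rb_props(3)[OF tM(2) c] ct by simp
  have e: "\<And>x. a' < x \<Longrightarrow> x < b' \<Longrightarrow> ff x = PF a' b' x \<and> fd x = fxd a' b' (sg a' b' x) \<and> gg x = PG a' b' x \<and> gd x = fyd a' b' (sg a' b' x) \<and> ee x = PE a' b' x"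
    using at_gap[OF g(1)] by blast
  have eb: "ff b' = PF a' b' b'" "gg b' = PG a' b' b'" "ee b' = PE a' b' b'"
    using at_K[OF bK] P_ends[OF ab] by auto
  have 1: "\<exists>\<xi>. t < \<xi> \<and> \<xi> < b' \<and> ff b' - ff t = fd \<xi> * (b' - t)"
  proof -
    obtain \<xi> where x: "t < \<xi>" "\<xi> < b'" "PF a' b' b' - PF a' b' t = fxd a' b' (sg a' b' \<xi>) * (b' - t)"
      using mvt_piece[OF g(3) cont_PF(1)[OF ab], where D="\<lambda>x. fxd a' b' (sg a' b' x)"] PF_deriv[OF ab] by blast
    then show ?thesis using e[OF g(2,3)] eb e[of \<xi>] g by (intro exI[of _ \<xi>]) auto
  qed
  have 2: "\<exists>\<xi>. t < \<xi> \<and> \<xi> < b' \<and> gg b' - gg t = gd \<xi> * (b' - t)"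
  proof -
    obtain \<xi> where x: "t < \<xi>" "\<xi> < b'" "PG a' b' b' - PG a' b' t = fyd a' b' (sg a' b' \<xi>) * (b' - t)"
      using mvt_piece[OF g(3) cont_PF(2)[OF ab], where D="\<lambda>x. fyd a' b' (sg a' b' x)"] PG_deriv[OF ab] by blast
    then show ?thesis using e[OF g(2,3)] eb e[of \<xi>] g by (intro exI[of _ \<xi>]) auto
  qed
  have 3: "\<exists>\<xi>. t < \<xi> \<and> \<xi> < b' \<and> ee b' - ee t = ed \<xi> * (b' - t)"
  proof -
    have cP: "continuous_on {t..b'} (PE a' b')"
      by (rule continuous_on_subset[OF PE_cont[OF ab]]) (use g in auto)
    obtain \<xi> where x: "t < \<xi>" "\<xi> < b'" "PE a' b' b' - PE a' b' t =
        2 * (fxd a' b' (sg a' b' \<xi>) * PG a' b' \<xi> - PF a' b' \<xi> * fyd a' b' (sg a' b' \<xi>)) * (b' - t)"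
      using mvt_piece[OF g(3) cP, where D="\<lambda>x. 2 * (fxd a' b' (sg a' b' x) * PG a' b' x - PF a' b' x * fyd a' b' (sg a' b' x))"]
        PE_deriv[OF ab] g by fastforce
    have "ed \<xi> = 2 * (fxd a' b' (sg a' b' \<xi>) * PG a' b' \<xi> - PF a' b' \<xi> * fyd a' b' (sg a' b' \<xi>))"
      using e[of \<xi>] x g by (simp add: ed_def)
    then show ?thesis using e[OF g(2,3)] eb x by (intro exI[of _ \<xi>]) auto
  qed
  show ?thesis using 1 2 3 bK bc g by blast
qed

end

lemma quot_to_lin:
  fixes X q d e :: real
  assumes "\<bar>X / d - q\<bar> < e" "d \<noteq> 0"
  shows "\<bar>X - q * d\<bar> \<le> e * \<bar>d\<bar>"
proof -
  have "X - q * d = (X / d - q) * d" using assms(2) by (simp add: field_simps)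
  then have "\<bar>X - q * d\<bar> = \<bar>X / d - q\<bar> * \<bar>d\<bar>" by (simp add: abs_mult)
  also have "\<dots> \<le> e * \<bar>d\<bar>" using assms(1) by (intro mult_right_mono) auto
  finally show ?thesis .
qed

context whit begin

lemma KK_fg:
  assumes c: "c \<in> K" and e: "\<epsilon> > 0"
  shows "\<exists>\<delta>>0. \<forall>a\<in>K. \<bar>a - c\<bar> < \<delta> \<longrightarrow> \<bar>ff a - ff c - fd c * (a - c)\<bar> \<le> \<epsilon> * \<bar>a - c\<bar>
      \<and> \<bar>gg a - gg c - gd c * (a - c)\<bar> \<le> \<epsilon> * \<bar>a - c\<bar>"
proof -
  obtain \<delta> where d: "\<delta> > 0" "HCP \<epsilon> \<delta>" using hypc'[OF e] by blast
  show ?thesis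
  proof (rule exI[of _ \<delta>], intro conjI[OF d(1)] ballI impI)
    fix a assume a: "a \<in> K" "\<bar>a - c\<bar> < \<delta>"
    show "\<bar>ff a - ff c - fd c * (a - c)\<bar> \<le> \<epsilon> * \<bar>a - c\<bar> \<and> \<bar>gg a - gg c - gd c * (a - c)\<bar> \<le> \<epsilon> * \<bar>a - c\<bar>"
    proof (cases "a = c")
      case True then show ?thesis by simp
    next
      case False
      then have "0 < \<bar>a - c\<bar>" by simp
      from HCP_D[OF d(2) c a(1) this a(2)]
      have h: "\<bar>(g1 a - g1 c) / (a - c) - q1 c\<bar> < \<epsilon>" "\<bar>(g2 a - g2 c) / (a - c) - q2 c\<bar> < \<epsilon>" by auto
      have ne: "a - c \<noteq> 0" using False by simp
      show ?thesis using quot_to_lin[OF h(1) ne] quot_to_lin[OF h(2) ne] at_K[OF a(1)] at_K[OF c] by simp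
    qed
  qed
qed

lemma KK_e:
  assumes c: "c \<in> K" and e: "\<epsilon> > 0"
  shows "\<exists>\<delta>>0. \<forall>a\<in>K. \<bar>a - c\<bar> < \<delta> \<longrightarrow> \<bar>ee a - ee c - ed c * (a - c)\<bar> \<le> \<epsilon> * \<bar>a - c\<bar>"
proof -
  define B where "B = \<bar>g1 c\<bar> + \<bar>g2 c\<bar> + 1"
  have B: "B \<ge> 1" unfolding B_def by simp
  define e0 where "e0 = \<epsilon> / (4 * B)"
  have e0: "e0 > 0" using e B by (simp add: e0_def)
  obtain \<delta> where d: "\<delta> > 0" "HCP e0 \<delta>" using hypc'[OF e0] by blast
  show ?thesis
  proof (intro exI[of _ "min \<delta> 1"] conjI ballI impI)
    show "min \<delta> 1 > 0" using d by simp
    fix a assume a: "a \<in> K" "\<bar>a - c\<bar> < min \<delta> 1"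
    show "\<bar>ee a - ee c - ed c * (a - c)\<bar> \<le> \<epsilon> * \<bar>a - c\<bar>"
    proof (cases "a = c")
      case True then show ?thesis by simp
    next
      case False
      define d0 where "d0 = a - c"
      have ne: "d0 \<noteq> 0" and dpos: "\<bar>d0\<bar> > 0" and d1: "\<bar>d0\<bar> < 1" using False a by (auto simp: d0_def)
      then have "0 < \<bar>a - c\<bar>" by (simp add: d0_def)
      from HCP_D[OF d(2) c a(1) this] a
      have h: "\<bar>(g1 a - g1 c) / d0 - q1 c\<bar> < e0" "\<bar>(g2 a - g2 c) / d0 - q2 c\<bar> < e0"
        "\<bar>(g3 a - g3 c + 2 * (g1 c * g2 a - g2 c * g1 a)) / d0^2\<bar> < e0" by (auto simp: d0_def)
      define r1 where "r1 = g1 a - g1 c - q1 c * d0"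
      define r2 where "r2 = g2 a - g2 c - q2 c * d0"
      define r3 where "r3 = g3 a - g3 c + 2 * (g1 c * g2 a - g2 c * g1 a)"
      have r1: "\<bar>r1\<bar> \<le> e0 * \<bar>d0\<bar>" unfolding r1_def by (rule quot_to_lin[OF h(1) ne])
      have r2: "\<bar>r2\<bar> \<le> e0 * \<bar>d0\<bar>" unfolding r2_def by (rule quot_to_lin[OF h(2) ne])
      have r3: "\<bar>r3\<bar> \<le> e0 * d0^2"
      proof -
        have "\<bar>r3\<bar> = \<bar>r3 / d0^2\<bar> * d0^2" using ne by (simp add: abs_div)
        also have "\<dots> \<le> e0 * d0^2" using h(3) unfolding r3_def by (intro mult_right_mono) auto
        finally show ?thesis .
      qed
      have edc: "ed c = 2 * (q1 c * g2 c - g1 c * q2 c)" using at_K[OF c] by (simp add: ed_def)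
      have key: "ee a - ee c - ed c * (a - c) = r3 - 2 * g1 c * r2 + 2 * g2 c * r1"
        unfolding edc r1_def r2_def r3_def d0_def using at_K[OF a(1)] at_K[OF c]
        by (simp add: algebra_simps)
      have "\<bar>r3 - 2 * g1 c * r2 + 2 * g2 c * r1\<bar> \<le> \<bar>r3\<bar> + 2 * \<bar>g1 c\<bar> * \<bar>r2\<bar> + 2 * \<bar>g2 c\<bar> * \<bar>r1\<bar>"
      proof -
        have "\<bar>2 * g1 c * r2\<bar> = 2 * \<bar>g1 c\<bar> * \<bar>r2\<bar>" "\<bar>2 * g2 c * r1\<bar> = 2 * \<bar>g2 c\<bar> * \<bar>r1\<bar>"
          by (simp_all add: abs_mult)
        then show ?thesis using abs_triangle_ineq4[of r3 "2 * g1 c * r2"]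
          abs_triangle_ineq[of "r3 - 2 * g1 c * r2" "2 * g2 c * r1"] by linarith
      qed
      also have "\<dots> \<le> e0 * d0^2 + 2 * \<bar>g1 c\<bar> * (e0 * \<bar>d0\<bar>) + 2 * \<bar>g2 c\<bar> * (e0 * \<bar>d0\<bar>)"
        using r1 r2 r3 by (intro add_mono mult_left_mono) auto
      also have "\<dots> = e0 * \<bar>d0\<bar> * (\<bar>d0\<bar> + 2 * \<bar>g1 c\<bar> + 2 * \<bar>g2 c\<bar>)"
        by (simp add: algebra_simps power2_eq_square abs_mult_self_eq)
      also have "\<dots> \<le> e0 * \<bar>d0\<bar> * (2 * B)"
        using d1 e0 unfolding B_def by (intro mult_left_mono) auto
      also have "\<dots> = \<epsilon> / 2 * \<bar>d0\<bar>" using B by (simp add: e0_def field_simps)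
      also have "\<dots> \<le> \<epsilon> * \<bar>a - c\<bar>" using e by (simp add: d0_def)
      finally show ?thesis unfolding key .
    qed
  qed
qed

lemma ff_cont: "isCont ff t" "isCont gg t"
proof -
  have "(ff has_real_derivative fd t) (at t) \<and> (gg has_real_derivative gd t) (at t)"
  proof (cases "t \<in> K")
    case False then show ?thesis using deriv_out by auto
  next
    case True
    have f: "(ff has_real_derivative fd t) (at t)"
    proof (rule deriv_at_K[where K=K, OF True cont_fd(1)])
      fix \<epsilon> :: real assume "\<epsilon> > 0"
      then show "\<exists>\<delta>>0. \<forall>a\<in>K. \<bar>a - t\<bar> < \<delta> \<longrightarrow> \<bar>ff a - ff t - fd t * (a - t)\<bar> \<le> \<epsilon> * \<bar>a - t\<bar>"
        using KK_fg[OF True] by blast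
    next
      fix s assume "s \<notin> K" "t < s"
      then show "\<exists>a'\<in>K. t \<le> a' \<and> a' < s \<and> (\<exists>\<xi>. a' < \<xi> \<and> \<xi> < s \<and> ff s - ff a' = fd \<xi> * (s - a'))"
        using PR_all[OF _ True] by blast
    next
      fix s assume "s \<notin> K" "s < t"
      then show "\<exists>b'\<in>K. s < b' \<and> b' \<le> t \<and> (\<exists>\<xi>. s < \<xi> \<and> \<xi> < b' \<and> ff b' - ff s = fd \<xi> * (b' - s))"
        using PL_all[OF _ True] by blast
    qed
    have g: "(gg has_real_derivative gd t) (at t)"
    proof (rule deriv_at_K[where K=K, OF True cont_fd(2)])
      fix \<epsilon> :: real assume "\<epsilon> > 0"
      then show "\<exists>\<delta>>0. \<forall>a\<in>K. \<bar>a - t\<bar> < \<delta> \<longrightarrow> \<bar>gg a - gg t - gd t * (a - t)\<bar> \<le> \<epsilon> * \<bar>a - t\<bar>"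
        using KK_fg[OF True] by blast
    next
      fix s assume "s \<notin> K" "t < s"
      then show "\<exists>a'\<in>K. t \<le> a' \<and> a' < s \<and> (\<exists>\<xi>. a' < \<xi> \<and> \<xi> < s \<and> gg s - gg a' = gd \<xi> * (s - a'))"
        using PR_all[OF _ True] by blast
    next
      fix s assume "s \<notin> K" "s < t"
      then show "\<exists>b'\<in>K. s < b' \<and> b' \<le> t \<and> (\<exists>\<xi>. s < \<xi> \<and> \<xi> < b' \<and> gg b' - gg s = gd \<xi> * (b' - s))"
        using PL_all[OF _ True] by blast
    qed
    show ?thesis using f g by simp
  qed
  then show "isCont ff t" "isCont gg t" using DERIV_isCont by blast+
qed

lemma ff_deriv: "(ff has_real_derivative fd t) (at t)" "(gg has_real_derivative gd t) (at t)"
proof -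
  have "(ff has_real_derivative fd t) (at t) \<and> (gg has_real_derivative gd t) (at t)"
  proof (cases "t \<in> K")
    case False then show ?thesis using deriv_out by auto
  next
    case True
    have f: "(ff has_real_derivative fd t) (at t)"
    proof (rule deriv_at_K[where K=K, OF True cont_fd(1)])
      fix \<epsilon> :: real assume "\<epsilon> > 0"
      then show "\<exists>\<delta>>0. \<forall>a\<in>K. \<bar>a - t\<bar> < \<delta> \<longrightarrow> \<bar>ff a - ff t - fd t * (a - t)\<bar> \<le> \<epsilon> * \<bar>a - t\<bar>"
        using KK_fg[OF True] by blast
    next
      fix s assume "s \<notin> K" "t < s"
      then show "\<exists>a'\<in>K. t \<le> a' \<and> a' < s \<and> (\<exists>\<xi>. a' < \<xi> \<and> \<xi> < s \<and> ff s - ff a' = fd \<xi> * (s - a'))"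
        using PR_all[OF _ True] by blast
    next
      fix s assume "s \<notin> K" "s < t"
      then show "\<exists>b'\<in>K. s < b' \<and> b' \<le> t \<and> (\<exists>\<xi>. s < \<xi> \<and> \<xi> < b' \<and> ff b' - ff s = fd \<xi> * (b' - s))"
        using PL_all[OF _ True] by blast
    qed
    have g: "(gg has_real_derivative gd t) (at t)"
    proof (rule deriv_at_K[where K=K, OF True cont_fd(2)])
      fix \<epsilon> :: real assume "\<epsilon> > 0"
      then show "\<exists>\<delta>>0. \<forall>a\<in>K. \<bar>a - t\<bar> < \<delta> \<longrightarrow> \<bar>gg a - gg t - gd t * (a - t)\<bar> \<le> \<epsilon> * \<bar>a - t\<bar>"
        using KK_fg[OF True] by blast
    next
      fix s assume "s \<notin> K" "t < s"
      then show "\<exists>a'\<in>K. t \<le> a' \<and> a' < s \<and> (\<exists>\<xi>. a' < \<xi> \<and> \<xi> < s \<and> gg s - gg a' = gd \<xi> * (s - a'))"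
        using PR_all[OF _ True] by blast
    next
      fix s assume "s \<notin> K" "s < t"
      then show "\<exists>b'\<in>K. s < b' \<and> b' \<le> t \<and> (\<exists>\<xi>. s < \<xi> \<and> \<xi> < b' \<and> gg b' - gg s = gd \<xi> * (b' - s))"
        using PL_all[OF _ True] by blast
    qed
    show ?thesis using f g by simp
  qed
  then show "(ff has_real_derivative fd t) (at t)" "(gg has_real_derivative gd t) (at t)" by auto
qed

lemma ed_cont: "isCont ed t"
  unfolding ed_def[abs_def] by (intro continuous_intros cont_fd ff_cont)

lemma ee_deriv: "(ee has_real_derivative ed t) (at t)"
proof (cases "t \<in> K")
  case False then show ?thesis using deriv_out by auto
next
  case True
  show ?thesis
  proof (rule deriv_at_K[where K=K, OF True ed_cont])
    fix \<epsilon> :: real assume "\<epsilon> > 0"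
    then show "\<exists>\<delta>>0. \<forall>a\<in>K. \<bar>a - t\<bar> < \<delta> \<longrightarrow> \<bar>ee a - ee t - ed t * (a - t)\<bar> \<le> \<epsilon> * \<bar>a - t\<bar>"
      using KK_e[OF True] by blast
  next
    fix s assume "s \<notin> K" "t < s"
    then show "\<exists>a'\<in>K. t \<le> a' \<and> a' < s \<and> (\<exists>\<xi>. a' < \<xi> \<and> \<xi> < s \<and> ee s - ee a' = ed \<xi> * (s - a'))"
      using PR_all[OF _ True] by blast
  next
    fix s assume "s \<notin> K" "s < t"
    then show "\<exists>b'\<in>K. s < b' \<and> b' \<le> t \<and> (\<exists>\<xi>. s < \<xi> \<and> \<xi> < b' \<and> ee b' - ee s = ed \<xi> * (b' - s))"
      using PL_all[OF _ True] by blast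
  qed
qed

end

context whit begin

lemma range_sub: "range fd \<subseteq> fd ` {m..M}" "range gd \<subseteq> gd ` {m..M}" "range ed \<subseteq> ed ` {m..M}"
proof -
  have mm: "m \<in> {m..M}" "M \<in> {m..M}" using mM(5) by auto
  have fm: "fd m = q1 m" "gd m = q2 m" "ff m = g1 m" "gg m = g2 m" using at_K[OF mM(1)] by auto
  have fM: "fd M = q1 M" "gd M = q2 M" "ff M = g1 M" "gg M = g2 M" using at_K[OF mM(2)] by auto
  have "fd t \<in> fd ` {m..M} \<and> gd t \<in> gd ` {m..M} \<and> ed t \<in> ed ` {m..M}" for t
  proof (cases "t < m")
    case True
    have "fd t = fd m" "gd t = gd m" using at_left[OF True] fm by auto
    moreover have "ed t = ed m"
    proof -
      have e: "ff t = g1 m + q1 m * (t - m)" "gg t = g2 m + q2 m * (t - m)" "fd t = q1 m" "gd t = q2 m"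
        using at_left[OF True] by (auto simp: RF_def RG_def)
      show ?thesis unfolding ed_def e fm by (simp add: algebra_simps)
    qed
    ultimately show ?thesis using mm by (metis image_eqI)
  next
    case False
    show ?thesis
    proof (cases "M < t")
      case True
      have "fd t = fd M" "gd t = gd M" using at_right[OF True] fM by auto
      moreover have "ed t = ed M"
      proof -
        have e: "ff t = g1 M + q1 M * (t - M)" "gg t = g2 M + q2 M * (t - M)" "fd t = q1 M" "gd t = q2 M"
          using at_right[OF True] by (auto simp: RF_def RG_def)
        show ?thesis unfolding ed_def e fM by (simp add: algebra_simps)
      qed
      ultimately show ?thesis using mm by (metis image_eqI)
    next
      case F2: False
      then have "t \<in> {m..M}" using False by auto
      then show ?thesis by blast
    qed
  qed
  then show "range fd \<subseteq> fd ` {m..M}" "range gd \<subseteq> gd ` {m..M}" "range ed \<subseteq> ed ` {m..M}" by auto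
qed

lemma cont_on: "continuous_on S fd" "continuous_on S gd" "continuous_on S ed"
  using cont_fd ed_cont by (simp_all add: continuous_at_imp_continuous_on)

lemma bounded_ranges: "bounded (range fd)" "bounded (range gd)" "bounded (range ed)"
  using bounded_subset[OF compact_imp_bounded[OF compact_continuous_image[OF cont_on(1) compact_Icc]] range_sub(1)]
    bounded_subset[OF compact_imp_bounded[OF compact_continuous_image[OF cont_on(2) compact_Icc]] range_sub(2)]
    bounded_subset[OF compact_imp_bounded[OF compact_continuous_image[OF cont_on(3) compact_Icc]] range_sub(3)]
  by auto

lemma C1_parts: "C1_fun ff" "C1_fun gg" "C1_fun ee"
  unfolding C1_fun_def using ff_deriv ee_deriv cont_on bounded_ranges by blast+

lemma extension: "C1_H K \<gamma>"
  unfolding C1_H_def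
proof (intro exI[of _ "\<lambda>t. (ff t, gg t, ee t)"] conjI)
  show "C1_curve (\<lambda>t. (ff t, gg t, ee t))"
    unfolding C1_curve_def using C1_parts by simp
  show "horizontal_curve (\<lambda>t. (ff t, gg t, ee t))"
    unfolding horizontal_curve_def Let_def fst_conv snd_conv
  proof (intro conjI)
    show "abs_cont ff" "abs_cont gg" "abs_cont ee" using C1_parts C1_fun_abs_cont by auto
    show "AE t in lborel. \<exists>f' g' h'. (ff has_real_derivative f') (at t) \<and>
        (gg has_real_derivative g') (at t) \<and> (ee has_real_derivative h') (at t) \<and> h' = 2 * (f' * gg t - ff t * g')"
    proof (rule AE_I2)
      fix t
      show "\<exists>f' g' h'. (ff has_real_derivative f') (at t) \<and>
        (gg has_real_derivative g') (at t) \<and> (ee has_real_derivative h') (at t) \<and> h' = 2 * (f' * gg t - ff t * g')"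
        using ff_deriv ee_deriv[of t] unfolding ed_def by blast
    qed
  qed
  show "\<forall>t\<in>K. (ff t, gg t, ee t) = \<gamma> t" using at_K \<gamma>_eq by simp
qed

end

lemma C1_H_empty: "C1_H {} \<gamma>"
proof -
  have c0: "C1_fun (\<lambda>t. 0)" unfolding C1_fun_def
    by (intro exI[of _ "\<lambda>t. 0"]) (auto intro: derivative_intros)
  have a0: "abs_cont (\<lambda>t. 0)" by (rule C1_fun_abs_cont[OF c0])
  show ?thesis unfolding C1_H_def
  proof (intro exI[of _ "\<lambda>t. (0, 0, 0)"] conjI)
    show "C1_curve (\<lambda>t. (0, 0, 0))" unfolding C1_curve_def using c0 by simp
    show "horizontal_curve (\<lambda>t. (0::real, 0::real, 0::real))" unfolding horizontal_curve_def Let_def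
      using a0 by (auto intro!: AE_I2 exI[of _ 0] derivative_intros)
  qed simp
qed


theorem theorem1p4:
  fixes K :: "real set" and \<gamma> :: "real \<Rightarrow> real \<times> real \<times> real"
  assumes "compact K" and "continuous_on K \<gamma>"
  shows "C1_H K \<gamma> \<longleftrightarrow>
    (\<exists>p :: real \<Rightarrow> real \<times> real \<times> real.
       (\<forall>a\<in>K. horizontal_point (p a)) \<and>
       (\<forall>\<epsilon>>0. \<exists>\<delta>>0. \<forall>a\<in>K. \<forall>b\<in>K. 0 < \<bar>b - a\<bar> \<and> \<bar>b - a\<bar> < \<delta> \<longrightarrow>
          norm (hdil (1 / (b - a)) (hmult (hinv (\<gamma> a)) (\<gamma> b)) - p a) < \<epsilon>))"
proof
  assume "C1_H K \<gamma>"
  then show "\<exists>p :: real \<Rightarrow> real \<times> real \<times> real.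
       (\<forall>a\<in>K. horizontal_point (p a)) \<and>
       (\<forall>\<epsilon>>0. \<exists>\<delta>>0. \<forall>a\<in>K. \<forall>b\<in>K. 0 < \<bar>b - a\<bar> \<and> \<bar>b - a\<bar> < \<delta> \<longrightarrow>
          norm (hdil (1 / (b - a)) (hmult (hinv (\<gamma> a)) (\<gamma> b)) - p a) < \<epsilon>)"
    using forward[OF assms(1)] by blast
next
  assume "\<exists>p :: real \<Rightarrow> real \<times> real \<times> real.
       (\<forall>a\<in>K. horizontal_point (p a)) \<and>
       (\<forall>\<epsilon>>0. \<exists>\<delta>>0. \<forall>a\<in>K. \<forall>b\<in>K. 0 < \<bar>b - a\<bar> \<and> \<bar>b - a\<bar> < \<delta> \<longrightarrow>
          norm (hdil (1 / (b - a)) (hmult (hinv (\<gamma> a)) (\<gamma> b)) - p a) < \<epsilon>)"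
  then obtain p where hp: "\<forall>a\<in>K. horizontal_point (p a)"
    and hy: "\<forall>\<epsilon>>0. \<exists>\<delta>>0. \<forall>a\<in>K. \<forall>b\<in>K. 0 < \<bar>b - a\<bar> \<and> \<bar>b - a\<bar> < \<delta> \<longrightarrow>
          norm (hdil (1 / (b - a)) (hmult (hinv (\<gamma> a)) (\<gamma> b)) - p a) < \<epsilon>" by blast
  show "C1_H K \<gamma>"
  proof (cases "K = {}")
    case True
    then show ?thesis using C1_H_empty by simp
  next
    case False
    interpret W: whit K \<gamma> p
      by (unfold_locales) (use assms(1) False hp hy in auto)
    show ?thesis by (rule W.extension)
  qed
qed

end
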